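(* Let $\varphi=\mathrm{vec}(A)$, $\varphi_0=\mathrm{vec}(A_0)$ with $A,A_0\in\mathbb{R}^{(p-r)\times r}$, $\|A\|_2<1$, $\|A_0\|_2<1$. If $$\|\sin\Theta\{U(\varphi),U(\varphi_0)\}\|_F\le\frac{(1-\|A_0\|_2^2)^2}{8(1+\|A_0\|_2^2)^2},$$ then $$\|\varphi-\varphi_0\|_2\le\sqrt2\Big\{1+\frac{32\sqrt2(1+\|A_0\|_2^2)^2}{(1-\|A_0\|_2^2)^2}\Big\}\|\sin\Theta\{U(\varphi),U(\varphi_0)\}\|_F .$$ Moreover, for all such $\varphi,\varphi_0$, $\|\sin\Theta\{U(\varphi),U(\varphi_0)\}\|_F\le4\|\varphi-\varphi_0\|_2$.
   Context: Fix $1\le r\le p$. For $A\in\mathbb{R}^{(p-r)\times r}$, $\varphi=\mathrm{vec}(A)$, $X_\varphi=\begin{bmatrix}0_{r\times r}&-A^{T}\\ A&0\end{bmatrix}$, $I_{p\times r}=\begin{bmatrix}I_r\\0\end{bmatrix}$, and $U(\varphi)=(I_p+X_\varphi)(I_p-X_\varphi)^{-1}I_{p\times r}\in\mathbb{O}(p,r)$ (Cayley parameterization; $\mathbb{O}(p,r)$ = $p\times r$ matrices with orthonormal columns). For $U,V\in\mathbb{O}(p,r)$ with singular values $\sigma_1\ge\dots\ge\sigma_r$ of $U^TV$, the canonical angles are $\theta_i=\arccos\sigma_i$ and $\|\sin\Theta(U,V)\|_F=(\sum_{i=1}^r\sin^2\theta_i)^{1/2}$. *)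

theory Defs
  imports "Jordan_Normal_Form.Char_Poly" "HOL-Computational_Algebra.Polynomial"
begin

definition vnorm2 :: "real vec \<Rightarrow> real" where
  "vnorm2 x = sqrt (\<Sum>i<dim_vec x. (x $ i)\<^sup>2)"

definition spec_norm :: "real mat \<Rightarrow> real" where
  "spec_norm A = Sup {vnorm2 (A *\<^sub>v x) | x. x \<in> carrier_vec (dim_col A) \<and> vnorm2 x = 1}"

definition vecm :: "real mat \<Rightarrow> real vec" where
  "vecm A = vec (dim_row A * dim_col A) (\<lambda>k. A $$ (k mod dim_row A, k div dim_row A))"

definition singular_values :: "real mat \<Rightarrow> real multiset" where
  "singular_values M = image_mset sqrt (proots (char_poly (transpose_mat M * M)))"

definition sinTheta_F :: "real mat \<Rightarrow> real mat \<Rightarrow> real" where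
  "sinTheta_F U V = sqrt (\<Sum>\<sigma>\<in>#singular_values (transpose_mat U * V). (sin (arccos \<sigma>))\<^sup>2)"

definition Xmat :: "real mat \<Rightarrow> real mat" where
  "Xmat A = four_block_mat (0\<^sub>m (dim_col A) (dim_col A)) (- transpose_mat A)
                           A (0\<^sub>m (dim_row A) (dim_row A))"

definition minv :: "real mat \<Rightarrow> real mat" where
  "minv M = (SOME B. B \<in> carrier_mat (dim_row M) (dim_row M) \<and>
                     B * M = 1\<^sub>m (dim_row M) \<and> M * B = 1\<^sub>m (dim_row M))"

definition Ipr :: "nat \<Rightarrow> nat \<Rightarrow> real mat" where
  "Ipr p r = mat p r (\<lambda>(i,j). if i = j then 1 else 0)"

(* Cayley parameterisation U(\<phi>), \<phi> = vec(A), A of size (p-r) x r, p = (p-r)+r *)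
definition cayleyU :: "real mat \<Rightarrow> real mat" where
  "cayleyU A = (let p = dim_row A + dim_col A; r = dim_col A; X = Xmat A in
      (1\<^sub>m p + X) * minv (1\<^sub>m p - X) * Ipr p r)"

end

theory Submission
  imports Defs "Jordan_Normal_Form.Schur_Decomposition"
begin

lemma cs_sum:
  fixes f g :: "'a \<Rightarrow> real"
  shows "(\<Sum>i\<in>I. f i * g i)^2 \<le> (\<Sum>i\<in>I. (f i)^2) * (\<Sum>i\<in>I. (g i)^2)"
proof -
  have "0 \<le> (\<Sum>i\<in>I. \<Sum>j\<in>I. (f i * g j - f j * g i)^2)" by (simp add: sum_nonneg)
  also have "\<dots> = (\<Sum>i\<in>I. \<Sum>j\<in>I. (f i)^2 * (g j)^2 + (f j)^2 * (g i)^2 - 2 * ((f i * g i) * (f j * g j)))"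
    by (intro sum.cong refl) (simp add: power2_eq_square algebra_simps)
  also have "\<dots> = (\<Sum>i\<in>I. \<Sum>j\<in>I. (f i)^2 * (g j)^2) + (\<Sum>i\<in>I. \<Sum>j\<in>I. (f j)^2 * (g i)^2)
      - 2 * (\<Sum>i\<in>I. \<Sum>j\<in>I. (f i * g i) * (f j * g j))"
    by (simp only: sum.distrib sum_subtractf sum_distrib_left)
  also have "\<dots> = 2 * ((\<Sum>i\<in>I. (f i)^2) * (\<Sum>i\<in>I. (g i)^2) - (\<Sum>i\<in>I. f i * g i)^2)"
    unfolding sum_product[symmetric] power2_eq_square[of "sum _ _"]
    by (subst sum.swap[of _ I I]) (simp add: sum_product[symmetric] algebra_simps)
  finally show ?thesis by simp
qed

definition mip :: "real mat \<Rightarrow> real mat \<Rightarrow> real" where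
  "mip X Y = (\<Sum>i<dim_row X. \<Sum>j<dim_col X. X $$ (i,j) * Y $$ (i,j))"

definition fro2 :: "real mat \<Rightarrow> real" where "fro2 X = mip X X"
definition fn :: "real mat \<Rightarrow> real" where "fn X = sqrt (fro2 X)"

lemma fro2_nonneg: "0 \<le> fro2 X"
  unfolding fro2_def mip_def by (intro sum_nonneg) auto

lemma mip_cart: "mip X Y = (\<Sum>(i,j)\<in>{..<dim_row X}\<times>{..<dim_col X}. X $$ (i,j) * Y $$ (i,j))"
  unfolding mip_def by (simp add: sum.cartesian_product)

lemma mip_cs:
  assumes "dim_row Y = dim_row X" "dim_col Y = dim_col X"
  shows "mip X Y \<le> fn X * fn Y"
proof -
  let ?I = "{..<dim_row X}\<times>{..<dim_col X}"
  have "(mip X Y)^2 \<le> fro2 X * fro2 Y"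
    using cs_sum[of "\<lambda>(i,j). X $$ (i,j)" "\<lambda>(i,j). Y $$ (i,j)" ?I] assms
    unfolding fro2_def mip_cart by (simp add: case_prod_beta power2_eq_square)
  hence "\<bar>mip X Y\<bar> \<le> sqrt (fro2 X * fro2 Y)" using real_le_rsqrt by (metis real_sqrt_abs real_sqrt_le_mono)
  thus ?thesis unfolding fn_def by (simp add: real_sqrt_mult)
qed

lemma vnorm2_alt: "vnorm2 x = sqrt (x \<bullet> x)"
  unfolding vnorm2_def scalar_prod_def by (simp add: power2_eq_square lessThan_atLeast0)

lemma sp_self_nonneg: "0 \<le> (x::real vec) \<bullet> x"
  unfolding scalar_prod_def by (auto intro: sum_nonneg)

lemma vec_cs: assumes "dim_vec y = dim_vec (x::real vec)"
  shows "x \<bullet> y \<le> sqrt (x \<bullet> x) * sqrt (y \<bullet> y)"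
proof -
  have "(x \<bullet> y)^2 \<le> (x \<bullet> x) * (y \<bullet> y)"
    using cs_sum[of "\<lambda>i. x $ i" "\<lambda>i. y $ i" "{0..<dim_vec x}"] assms
    unfolding scalar_prod_def by (simp add: power2_eq_square)
  hence "\<bar>x \<bullet> y\<bar> \<le> sqrt ((x \<bullet> x) * (y \<bullet> y))" by (metis real_sqrt_abs real_sqrt_le_mono)
  thus ?thesis by (simp add: real_sqrt_mult)
qed

lemma mip_cols: assumes "X \<in> carrier_mat nr nc" "Y \<in> carrier_mat nr nc"
  shows "mip X Y = (\<Sum>j<nc. col X j \<bullet> col Y j)"
  using assms unfolding mip_def scalar_prod_def
  by (simp add: lessThan_atLeast0) (rule sum.swap)

lemma mip_transpose: assumes "X \<in> carrier_mat nr nc" "Y \<in> carrier_mat nr nc"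
  shows "mip (X\<^sup>T) (Y\<^sup>T) = mip X Y"
  using assms unfolding mip_def by (simp add: sum.swap[of _ "{..<nc}"])

lemma fro2_transpose: "X \<in> carrier_mat nr nc \<Longrightarrow> fro2 (X\<^sup>T) = fro2 X"
  unfolding fro2_def using mip_transpose by blast

lemma mip_comm: assumes "X \<in> carrier_mat nr nc" "Y \<in> carrier_mat nr nc"
  shows "mip X Y = mip Y X"
  using assms unfolding mip_def by (simp add: mult.commute)

lemma mip_add: assumes "X \<in> carrier_mat nr nc" "Y \<in> carrier_mat nr nc" "Z \<in> carrier_mat nr nc"
  shows "mip X (Y + Z) = mip X Y + mip X Z"
  using assms unfolding mip_def by (simp add: algebra_simps sum.distrib)

lemma mip_minus: assumes "X \<in> carrier_mat nr nc" "Y \<in> carrier_mat nr nc" "Z \<in> carrier_mat nr nc"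
  shows "mip X (Y - Z) = mip X Y - mip X Z"
  using assms unfolding mip_def by (simp add: algebra_simps sum_subtractf)

lemma mip_minus_left: assumes "X \<in> carrier_mat nr nc" "Y \<in> carrier_mat nr nc" "Z \<in> carrier_mat nr nc"
  shows "mip (Y - Z) X = mip Y X - mip Z X"
  using assms unfolding mip_def by (simp add: algebra_simps sum_subtractf)

lemma fro2_minus: assumes "X \<in> carrier_mat nr nc" "Y \<in> carrier_mat nr nc"
  shows "fro2 (X - Y) = fro2 X - 2 * mip X Y + fro2 Y"
  using assms unfolding fro2_def mip_def
  by (simp add: power2_eq_square algebra_simps sum_subtractf sum.distrib sum_distrib_left)

lemma fn_nonneg: "0 \<le> fn X" unfolding fn_def using fro2_nonneg by simp

lemma fn_sq: "(fn X)^2 = fro2 X" unfolding fn_def using fro2_nonneg by simp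

lemma fn_add: assumes "X \<in> carrier_mat nr nc" "Y \<in> carrier_mat nr nc"
  shows "fn (X + Y) \<le> fn X + fn Y"
proof -
  have "fro2 (X + Y) = fro2 X + 2 * mip X Y + fro2 Y"
    using assms unfolding fro2_def mip_def
    by (simp add: power2_eq_square algebra_simps sum.distrib sum_distrib_left)
  also have "\<dots> \<le> (fn X)^2 + 2 * (fn X * fn Y) + (fn Y)^2"
    using mip_cs[of Y X] assms by (simp add: fn_sq)
  also have "\<dots> = (fn X + fn Y)^2" by (simp add: power2_eq_square algebra_simps)
  finally show ?thesis unfolding fn_def
    by (metis fn_def fn_nonneg add_nonneg_nonneg real_le_lsqrt)
qed

lemma fn_minus: assumes "X \<in> carrier_mat nr nc" "Y \<in> carrier_mat nr nc"
  shows "fn (X - Y) \<le> fn X + fn Y"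
proof -
  have "X - Y = X + (- Y)" using assms by auto
  moreover have "fn (- Y) = fn Y" unfolding fn_def fro2_def mip_def by simp
  ultimately show ?thesis using fn_add[of X nr nc "- Y"] assms by simp
qed

lemma fn_smult: "fn (c \<cdot>\<^sub>m X) = \<bar>c\<bar> * fn X"
proof -
  have "fro2 (c \<cdot>\<^sub>m X) = c^2 * fro2 X"
    unfolding fro2_def mip_def by (simp add: sum_distrib_left power2_eq_square algebra_simps)
  thus ?thesis unfolding fn_def by (simp add: real_sqrt_mult)
qed

lemma mip_lower_fn:
  assumes "Y \<in> carrier_mat nr nc" "D \<in> carrier_mat nr nc" "b * fro2 D \<le> mip D Y"
  shows "b * fn D \<le> fn Y"
proof (cases "fn D = 0")
  case True thus ?thesis using fn_nonneg[of Y] by simp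
next
  case False
  hence pos: "fn D > 0" using fn_nonneg[of D] by simp
  have "fn D * (b * fn D) = b * fro2 D" using fn_sq[of D] by (simp add: power2_eq_square)
  moreover have "mip D Y \<le> fn D * fn Y" using assms mip_cs[of Y D] by simp
  ultimately have "fn D * (b * fn D) \<le> fn D * fn Y" using assms(3) by linarith
  thus ?thesis using pos by simp
qed

lemma fro2_mult_left:
  assumes A: "A \<in> carrier_mat k n" and D: "D \<in> carrier_mat n nc"
    and c: "\<And>x. x \<in> carrier_vec n \<Longrightarrow> (A *\<^sub>v x) \<bullet> (A *\<^sub>v x) \<le> c * (x \<bullet> x)"
  shows "fro2 (A * D) \<le> c * fro2 D"
proof -
  have "fro2 (A * D) = (\<Sum>j<nc. col (A*D) j \<bullet> col (A*D) j)"
    unfolding fro2_def using A D by (intro mip_cols) auto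
  also have "\<dots> = (\<Sum>j<nc. (A *\<^sub>v col D j) \<bullet> (A *\<^sub>v col D j))"
  proof (intro sum.cong refl)
    fix j assume "j \<in> {..<nc}"
    hence "col (A*D) j = A *\<^sub>v col D j" using A D by (intro col_mult2) auto
    thus "col (A*D) j \<bullet> col (A*D) j = (A *\<^sub>v col D j) \<bullet> (A *\<^sub>v col D j)" by (simp only:)
  qed
  also have "\<dots> \<le> (\<Sum>j<nc. c * (col D j \<bullet> col D j))"
    using D by (intro sum_mono c) auto
  also have "\<dots> = c * fro2 D" unfolding fro2_def using D by (simp add: mip_cols sum_distrib_left)
  finally show ?thesis .
qed

lemma fro2_mult_right:
  assumes W: "W \<in> carrier_mat n k" and Z: "Z \<in> carrier_mat nr n"
    and c: "\<And>x. x \<in> carrier_vec n \<Longrightarrow> (W\<^sup>T *\<^sub>v x) \<bullet> (W\<^sup>T *\<^sub>v x) \<le> c * (x \<bullet> x)"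
  shows "fro2 (Z * W) \<le> c * fro2 Z"
proof -
  have "fro2 (Z * W) = fro2 ((Z * W)\<^sup>T)" using W Z by (simp add: fro2_transpose[of _ nr k])
  also have "(Z * W)\<^sup>T = W\<^sup>T * Z\<^sup>T" using W Z by (simp add: transpose_mult)
  also have "fro2 (W\<^sup>T * Z\<^sup>T) \<le> c * fro2 (Z\<^sup>T)" using W Z c by (intro fro2_mult_left[of _ k n]) auto
  also have "fro2 (Z\<^sup>T) = fro2 Z" using Z fro2_transpose by blast
  finally show ?thesis .
qed

lemma mip_psd_left:
  assumes B: "B \<in> carrier_mat n n" and D: "D \<in> carrier_mat n nc"
    and b: "\<And>x. x \<in> carrier_vec n \<Longrightarrow> b * (x \<bullet> x) \<le> x \<bullet> (B *\<^sub>v x)"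
  shows "b * fro2 D \<le> mip D (B * D)"
proof -
  have "mip D (B * D) = (\<Sum>j<nc. col D j \<bullet> col (B*D) j)"
    using B D by (intro mip_cols) auto
  also have "\<dots> = (\<Sum>j<nc. col D j \<bullet> (B *\<^sub>v col D j))"
  proof (intro sum.cong refl)
    fix j assume "j \<in> {..<nc}"
    hence "col (B*D) j = B *\<^sub>v col D j" using B D by (intro col_mult2) auto
    thus "col D j \<bullet> col (B*D) j = col D j \<bullet> (B *\<^sub>v col D j)" by (simp only:)
  qed
  finally have e: "mip D (B * D) = \<dots>" .
  have "b * fro2 D = (\<Sum>j<nc. b * (col D j \<bullet> col D j))"
    unfolding fro2_def using D by (simp add: mip_cols sum_distrib_left)
  also have "\<dots> \<le> (\<Sum>j<nc. col D j \<bullet> (B *\<^sub>v col D j))"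
    using D by (intro sum_mono b) auto
  finally show ?thesis using e by simp
qed

lemma mip_psd_right:
  assumes B: "B \<in> carrier_mat n n" and D: "D \<in> carrier_mat nr n" and sym: "B\<^sup>T = B"
    and b: "\<And>x. x \<in> carrier_vec n \<Longrightarrow> b * (x \<bullet> x) \<le> x \<bullet> (B *\<^sub>v x)"
  shows "b * fro2 D \<le> mip D (D * B)"
proof -
  have "mip D (D * B) = mip (D\<^sup>T) ((D * B)\<^sup>T)" using B D by (simp add: mip_transpose[of _ nr n])
  also have "(D * B)\<^sup>T = B * D\<^sup>T" using B D sym by (simp add: transpose_mult)
  finally have e: "mip D (D * B) = mip (D\<^sup>T) (B * D\<^sup>T)" .
  have "b * fro2 (D\<^sup>T) \<le> mip (D\<^sup>T) (B * D\<^sup>T)" using B D b by (intro mip_psd_left[of _ n _ nr]) auto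
  thus ?thesis using e fro2_transpose[OF D] by simp
qed

interpretation rp: map_poly_inj_idom_hom "of_real :: real \<Rightarrow> complex" ..

lemma proots_lin: "proots (\<Prod>l\<leftarrow>ls. [:-l, 1:]) = mset (ls :: real list)"
proof (induction ls)
  case Nil thus ?case by simp
next
  case (Cons a ls)
  have nz: "(\<Prod>l\<leftarrow>ls. [:-l, 1:]) \<noteq> (0 :: real poly)"
    by (auto simp: prod_list_zero_iff)
  have "proots ([:-a, 1:] * (\<Prod>l\<leftarrow>ls. [:-l, 1:])) = proots [:-a, 1:] + proots (\<Prod>l\<leftarrow>ls. [:-l, 1:])"
    by (rule proots_mult) (use nz in auto)
  thus ?case using Cons by (simp add: proots_linear_factor)
qed

definition mtr :: "'a :: comm_ring_1 mat \<Rightarrow> 'a" where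
  "mtr A = (\<Sum>i<dim_row A. A $$ (i,i))"

lemma mtr_comm: assumes "X \<in> carrier_mat n k" "Y \<in> carrier_mat k n"
  shows "mtr (X * Y) = mtr (Y * X)"
  using assms unfolding mtr_def
  by (simp add: scalar_prod_def sum.swap[of _ "{0..<n}"] lessThan_atLeast0 mult.commute)

lemma mtr_similar: assumes "similar_mat_wit A B P Q" "A \<in> carrier_mat n n"
  shows "mtr A = mtr B"
proof -
  from assms have c: "B \<in> carrier_mat n n" "P \<in> carrier_mat n n" "Q \<in> carrier_mat n n"
    and QP: "Q * P = 1\<^sub>m n" and A: "A = P * B * Q"
    unfolding similar_mat_wit_def Let_def by auto
  have "mtr A = mtr ((P * B) * Q)" using A by simp
  also have "\<dots> = mtr (Q * (P * B))" using c by (intro mtr_comm[of _ n n]) auto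
  also have "Q * (P * B) = (Q * P) * B" using c by (simp add: assoc_mult_mat)
  also have "\<dots> = B" using QP c by simp
  finally show ?thesis .
qed

lemma herm_real_eig:
  fixes G :: "real mat"
  assumes G: "G \<in> carrier_mat n n" and sym: "G\<^sup>T = G"
    and ev: "eigenvalue (of_real_hom.mat_hom G) e"
  shows "Im e = 0"
proof -
  let ?Gc = "of_real_hom.mat_hom G"
  obtain v where v: "v \<in> carrier_vec n" "v \<noteq> 0\<^sub>v n" "?Gc *\<^sub>v v = e \<cdot>\<^sub>v v"
    using ev G unfolding eigenvalue_def eigenvector_def by auto
  have Gs: "\<And>i k. i < n \<Longrightarrow> k < n \<Longrightarrow> G $$ (k,i) = G $$ (i,k)"
    using sym G by (metis carrier_matD index_transpose_mat(1))
  define q where "q = (\<Sum>i<n. \<Sum>k<n. cnj (v$i) * of_real (G $$ (i,k)) * v$k)"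
  define N where "N = (\<Sum>i<n. cnj (v$i) * v$i)"
  have row: "\<And>i. i < n \<Longrightarrow> (?Gc *\<^sub>v v) $ i = (\<Sum>k<n. of_real (G $$ (i,k)) * v$k)"
    using G v(1) by (simp add: scalar_prod_def lessThan_atLeast0)
  have "q = (\<Sum>i<n. cnj (v$i) * (?Gc *\<^sub>v v) $ i)"
    unfolding q_def by (simp add: row sum_distrib_left mult.assoc)
  also have "\<dots> = (\<Sum>i<n. cnj (v$i) * (e * v $ i))" using v by simp
  also have "\<dots> = e * N" unfolding N_def by (simp add: sum_distrib_left algebra_simps)
  finally have qe: "q = e * N" .
  have "cnj q = (\<Sum>i<n. \<Sum>k<n. v$i * of_real (G $$ (i,k)) * cnj (v$k))"
    unfolding q_def by (simp add: cnj_sum)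
  also have "\<dots> = (\<Sum>k<n. \<Sum>i<n. v$i * of_real (G $$ (i,k)) * cnj (v$k))"
    by (rule sum.swap)
  also have "\<dots> = q" unfolding q_def
    by (intro sum.cong refl) (simp add: Gs mult.commute mult.left_commute)
  finally have cq: "cnj q = q" .
  have Nr: "N = of_real (\<Sum>i<n. (cmod (v$i))^2)"
    unfolding N_def of_real_sum complex_norm_square by (simp add: mult.commute)
  obtain i where i: "i < n" "v $ i \<noteq> 0" using v by (metis vec_eq_iff carrier_vecD index_zero_vec)
  have "0 < (\<Sum>i<n. (cmod (v$i))^2)"
    by (rule sum_pos2[of _ i]) (use i in auto)
  hence N0: "N \<noteq> 0" using Nr by (metis of_real_eq_0_iff less_irrefl)
  have "cnj e * cnj N = e * N" using qe cq by (metis complex_cnj_mult)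
  moreover have "cnj N = N" using Nr by simp
  ultimately have "cnj e = e" using N0 by simp
  thus ?thesis by (metis cnj.simps(2) neg_equal_zero)
qed

lemma real_sym_split:
  fixes G :: "real mat"
  assumes G: "G \<in> carrier_mat n n" and sym: "G\<^sup>T = G"
  shows "\<exists>ls. char_poly G = (\<Prod>l\<leftarrow>ls. [:-l, 1:]) \<and> sum_list ls = mtr G"
proof -
  let ?Gc = "of_real_hom.mat_hom G :: complex mat"
  have Gc: "?Gc \<in> carrier_mat n n" using G by simp
  obtain es where es: "char_poly ?Gc = (\<Prod>a\<leftarrow>es. [:-a, 1:])" "length es = n"
    using char_poly_factorized[OF Gc] by auto
  obtain B P Q where sd: "schur_decomposition ?Gc es = (B,P,Q)"
    by (cases "schur_decomposition ?Gc es") auto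
  note sd2 = schur_decomposition[OF Gc es(1) sd]
  have sim: "similar_mat_wit ?Gc B P Q" using sd2 by (rule conjunct1)
  have diag: "diag_mat B = es" using sd2 by (blast dest: conjunct2)
  have Bc: "B \<in> carrier_mat n n" using similar_mat_witD2[OF Gc sim] by blast
  have "mtr ?Gc = mtr B" by (rule mtr_similar[OF sim Gc])
  also have "\<dots> = sum_list es" unfolding diag[symmetric] mtr_def diag_mat_def
    using Bc by (simp add: sum_list_sum_nth lessThan_atLeast0)
  finally have tr: "mtr ?Gc = sum_list es" .
  have real: "Im e = 0" if e: "e \<in> set es" for e
  proof -
    have "poly (char_poly ?Gc) e = 0" unfolding es(1) using e by (rule linear_poly_root)
    hence "eigenvalue ?Gc e" using eigenvalue_root_char_poly[OF Gc] by simp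
    thus ?thesis by (rule herm_real_eig[OF G sym])
  qed
  define ls where "ls = map Re es"
  have es_eq: "es = map of_real ls"
    unfolding ls_def map_map o_def using real by (intro map_idI[symmetric]) (simp add: complex_eq_iff)
  have "map_poly of_real (char_poly G) = char_poly ?Gc" by (rule HOL.sym, rule of_real_hom.char_poly_hom[OF G])
  also have "\<dots> = (\<Prod>l\<leftarrow>ls. [:- of_real l, 1:])" unfolding es(1) es_eq by (simp add: o_def)
  also have "\<dots> = map_poly of_real (\<Prod>l\<leftarrow>ls. [:-l, 1:])"
    by (simp add: rp.hom_prod_list o_def)
  finally have cp: "char_poly G = (\<Prod>l\<leftarrow>ls. [:-l, 1:])" by (rule rp.injectivity)
  have osl: "\<And>xs. (of_real (sum_list xs) :: complex) = sum_list (map of_real xs)"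
    by (induct_tac xs) auto
  have "of_real (sum_list ls) = sum_list es" unfolding es_eq by (rule osl)
  also have "\<dots> = of_real (mtr G)" unfolding tr[symmetric] mtr_def using G by (simp add: of_real_sum)
  finally have "sum_list ls = mtr G" by simp
  with cp show ?thesis by blast
qed

lemma sp_pos: assumes "v \<in> carrier_vec n" "v \<noteq> 0\<^sub>v n" shows "0 < (v::real vec) \<bullet> v"
proof -
  obtain i where i: "i < n" "v $ i \<noteq> 0" using assms by (metis vec_eq_iff carrier_vecD index_zero_vec)
  have "0 < (\<Sum>k\<in>{0..<n}. v $ k * v $ k)"
    by (rule sum_pos2[of _ i]) (use i in \<open>auto simp: zero_less_mult_iff linorder_neq_iff\<close>)
  thus ?thesis using assms unfolding scalar_prod_def by simp
qed

lemma mtr_fro2: assumes "M \<in> carrier_mat k r" shows "mtr (M\<^sup>T * M) = fro2 M"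
  using assms unfolding mtr_def fro2_def mip_def
  by (simp add: scalar_prod_def lessThan_atLeast0) (rule sum.swap)

lemma sv_sum:
  fixes M :: "real mat"
  assumes M: "M \<in> carrier_mat r r"
    and contr: "\<And>x. x \<in> carrier_vec r \<Longrightarrow> (M *\<^sub>v x) \<bullet> (M *\<^sub>v x) \<le> x \<bullet> x"
  shows "(\<Sum>\<sigma>\<in>#singular_values M. (sin (arccos \<sigma>))\<^sup>2) = real r - fro2 M"
proof -
  define G where "G = M\<^sup>T * M"
  have G: "G \<in> carrier_mat r r" unfolding G_def using M by simp
  have sym: "G\<^sup>T = G" unfolding G_def using M by (simp add: transpose_mult)
  obtain ls where ls: "char_poly G = (\<Prod>l\<leftarrow>ls. [:-l, 1:])" "sum_list ls = mtr G"
    using real_sym_split[OF G sym] by blast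
  have len: "length ls = r"
    using degree_monic_char_poly[OF G] degree_linear_factors[of uminus ls] ls(1) by simp
  have bnd: "0 \<le> l \<and> l \<le> 1" if l: "l \<in> set ls" for l
  proof -
    have "poly (char_poly G) l = 0" unfolding ls(1) using l by (rule linear_poly_root)
    hence "eigenvalue G l" using eigenvalue_root_char_poly[OF G] by simp
    then obtain v where v: "v \<in> carrier_vec r" "v \<noteq> 0\<^sub>v r" "G *\<^sub>v v = l \<cdot>\<^sub>v v"
      using G unfolding eigenvalue_def eigenvector_def by auto
    have Mv: "M *\<^sub>v v \<in> carrier_vec r" using M v by simp
    have "G *\<^sub>v v = M\<^sup>T *\<^sub>v (M *\<^sub>v v)" unfolding G_def using M v by (simp add: assoc_mult_mat_vec)
    hence "(G *\<^sub>v v) \<bullet> v = (M *\<^sub>v v) \<bullet> (M *\<^sub>v v)"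
      using transpose_vec_mult_scalar[OF M v(1) Mv] by simp
    hence e: "l * (v \<bullet> v) = (M *\<^sub>v v) \<bullet> (M *\<^sub>v v)" using v by simp
    have p: "0 < v \<bullet> v" by (rule sp_pos[OF v(1,2)])
    have "0 \<le> l * (v \<bullet> v)" unfolding e by (rule sp_self_nonneg)
    moreover have "l * (v \<bullet> v) \<le> 1 * (v \<bullet> v)" unfolding e using contr[OF v(1)] by simp
    ultimately show ?thesis using p by (simp add: zero_le_mult_iff mult_le_cancel_right)
  qed
  have "singular_values M = image_mset sqrt (mset ls)"
    unfolding singular_values_def G_def[symmetric] ls(1) proots_lin ..
  hence "(\<Sum>\<sigma>\<in>#singular_values M. (sin (arccos \<sigma>))\<^sup>2) = (\<Sum>l\<leftarrow>ls. (sin (arccos (sqrt l)))\<^sup>2)"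
    by (simp add: mset_map[symmetric] sum_mset_sum_list o_def del: mset_map)
  also have "\<dots> = (\<Sum>l\<leftarrow>ls. 1 - l)"
  proof (rule arg_cong[where f = sum_list], rule map_cong[OF refl])
    fix l assume "l \<in> set ls"
    with bnd have l: "0 \<le> l" "l \<le> 1" by auto
    have "sqrt l \<le> 1" using l by simp
    moreover have "-1 \<le> sqrt l" using l by (meson le_minus_one_simps(1) order_trans real_sqrt_ge_zero)
    ultimately show "(sin (arccos (sqrt l)))\<^sup>2 = 1 - l" using l by (simp add: sin_arccos)
  qed
  also have "\<dots> = real r - sum_list ls" using len by (simp add: sum_list_subtractf sum_list_triv)
  also have "\<dots> = real r - fro2 M" unfolding ls(2) G_def using mtr_fro2[OF M] by simp
  finally show ?thesis .
qed

lemma skew_quad: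
  assumes K: "K \<in> carrier_mat n n" and sk: "\<And>i j. i < n \<Longrightarrow> j < n \<Longrightarrow> K $$ (j,i) = - K $$ (i,j)"
    and w: "w \<in> carrier_vec n"
  shows "w \<bullet> (K *\<^sub>v w) = (0::real)"
proof -
  define q where "q = (\<Sum>i<n. \<Sum>k<n. w$i * K $$ (i,k) * w$k)"
  have "w \<bullet> (K *\<^sub>v w) = (\<Sum>i<n. w$i * (\<Sum>k<n. K $$ (i,k) * w$k))"
    using K w by (auto intro!: sum.cong simp: scalar_prod_def atLeast0LessThan)
  also have "\<dots> = q" unfolding q_def by (simp add: sum_distrib_left mult.assoc)
  finally have "w \<bullet> (K *\<^sub>v w) = q" .
  moreover have "q = (\<Sum>k<n. \<Sum>i<n. w$i * K $$ (i,k) * w$k)" unfolding q_def by (rule sum.swap)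
  moreover have "\<dots> = - q"
  proof -
    have pw: "w$i * K $$ (i,k) * w$k = -(w$k * K $$ (k,i) * w$i)" if "i < n" "k < n" for i k
      using sk[of k i] that by simp
    show ?thesis unfolding q_def sum_negf[symmetric] by (intro sum.cong refl, rule pw, auto)
  qed
  ultimately show ?thesis by linarith
qed

lemma skew_inv_contr:
  assumes K: "K \<in> carrier_mat n n" and sk: "\<And>i j. i < n \<Longrightarrow> j < n \<Longrightarrow> K $$ (j,i) = - K $$ (i,j)"
    and W: "W \<in> carrier_mat n n" and inv: "(1\<^sub>m n - K) * W = 1\<^sub>m n"
    and z: "z \<in> carrier_vec n"
  shows "(W *\<^sub>v z) \<bullet> (W *\<^sub>v z) \<le> z \<bullet> (z::real vec)"
proof -
  define w where "w = W *\<^sub>v z"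
  have w: "w \<in> carrier_vec n" unfolding w_def using W z by simp
  have Kw: "K *\<^sub>v w \<in> carrier_vec n" using K w by simp
  have IK: "1\<^sub>m n - K \<in> carrier_mat n n" using K by (rule minus_carrier_mat)
  have "z = ((1\<^sub>m n - K) * W) *\<^sub>v z" using inv z by simp
  also have "\<dots> = (1\<^sub>m n - K) *\<^sub>v w" unfolding w_def using IK W z by (rule assoc_mult_mat_vec)
  also have "\<dots> = w - K *\<^sub>v w" using minus_mult_distrib_mat_vec[of "1\<^sub>m n" n n K w] K w by simp
  finally have zw: "z = w - K *\<^sub>v w" .
  have q0: "w \<bullet> (K *\<^sub>v w) = 0" by (rule skew_quad[OF K sk w])
  have "z \<bullet> z = w \<bullet> w - 2 * (w \<bullet> (K *\<^sub>v w)) + (K *\<^sub>v w) \<bullet> (K *\<^sub>v w)"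
    unfolding zw using w Kw
    by (simp add: minus_scalar_prod_distrib scalar_prod_minus_distrib comm_scalar_prod[of "K *\<^sub>v w" n w])
  also have "\<dots> \<ge> w \<bullet> w" using q0 sp_self_nonneg[of "K *\<^sub>v w"] by simp
  finally show ?thesis unfolding w_def .
qed

lemma skew_inv_exists:
  fixes K :: "real mat"
  assumes K: "K \<in> carrier_mat n n" and sk: "\<And>i j. i < n \<Longrightarrow> j < n \<Longrightarrow> K $$ (j,i) = - K $$ (i,j)"
  shows "\<exists>W. W \<in> carrier_mat n n \<and> W * (1\<^sub>m n - K) = 1\<^sub>m n \<and> (1\<^sub>m n - K) * W = 1\<^sub>m n"
proof -
  have IK: "1\<^sub>m n - K \<in> carrier_mat n n" using K by (rule minus_carrier_mat)
  have "det (1\<^sub>m n - K) \<noteq> (0::real)"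
  proof
    assume "det (1\<^sub>m n - K) = 0"
    then obtain v where v: "v \<in> carrier_vec n" "v \<noteq> 0\<^sub>v n" "(1\<^sub>m n - K) *\<^sub>v v = 0\<^sub>v n"
      using det_0_iff_vec_prod_zero[OF IK] by blast
    have "(1\<^sub>m n - K) *\<^sub>v v = v - K *\<^sub>v v" using minus_mult_distrib_mat_vec[of "1\<^sub>m n" n n K v] K v by simp
    hence "v - K *\<^sub>v v = 0\<^sub>v n" using v(3) by simp
    hence "v \<bullet> (v - K *\<^sub>v v) = 0" using v(1) by simp
    hence "v \<bullet> v - v \<bullet> (K *\<^sub>v v) = 0" using v K by (simp add: scalar_prod_minus_distrib)
    hence "v \<bullet> v = 0" using skew_quad[OF K sk v(1)] by simp
    thus False using sp_pos[OF v(1,2)] by simp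
  qed
  from det_non_zero_imp_unit[OF IK this, of undefined]
  show ?thesis unfolding Units_def ring_mat_simps by auto
qed

lemma mat_eq_one_vec:
  fixes M :: "real mat"
  assumes M: "M \<in> carrier_mat n n" and h: "\<And>x. x \<in> carrier_vec n \<Longrightarrow> M *\<^sub>v x = x"
  shows "M = 1\<^sub>m n"
proof (rule eq_matI)
  fix i j assume i: "i < dim_row (1\<^sub>m n :: real mat)" and j: "j < dim_col (1\<^sub>m n :: real mat)"
  have "M $$ (i,j) = (M *\<^sub>v unit_vec n j) $ i"
    using M i j by (simp add: scalar_prod_right_unit)
  also have "\<dots> = unit_vec n j $ i" using h[of "unit_vec n j"] by simp
  finally show "M $$ (i,j) = 1\<^sub>m n $$ (i,j)" using i j by simp
qed (use M in auto)

lemma sym_inv: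
  fixes S Y :: "real mat"
  assumes S: "S \<in> carrier_mat n n" and Y: "Y \<in> carrier_mat n n" and SY: "S * Y = 1\<^sub>m n"
    and sym: "S\<^sup>T = S"
  shows "Y\<^sup>T = Y" "Y * S = 1\<^sub>m n"
proof -
  have "Y\<^sup>T * S = (S * Y)\<^sup>T" using S Y sym by (simp add: transpose_mult)
  hence YS: "Y\<^sup>T * S = 1\<^sub>m n" using SY by simp
  have "Y\<^sup>T = Y\<^sup>T * (S * Y)" using SY Y by simp
  also have "\<dots> = (Y\<^sup>T * S) * Y" using S Y by (simp add: assoc_mult_mat)
  also have "\<dots> = Y" using YS Y by simp
  finally show "Y\<^sup>T = Y" .
  with YS show "Y * S = 1\<^sub>m n" by simp
qed

locale blk =
  fixes A Y :: "real mat" and m r :: nat and a :: real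
  assumes A: "A \<in> carrier_mat m r" and Y: "Y \<in> carrier_mat r r"
    and SY: "(1\<^sub>m r + A\<^sup>T * A) * Y = 1\<^sub>m r"
    and a0: "0 \<le> a" and a1: "a \<le> 1"
    and Ax: "\<And>x. x \<in> carrier_vec r \<Longrightarrow> (A *\<^sub>v x) \<bullet> (A *\<^sub>v x) \<le> a^2 * (x \<bullet> x)"
    and ATy: "\<And>y. y \<in> carrier_vec m \<Longrightarrow> (A\<^sup>T *\<^sub>v y) \<bullet> (A\<^sup>T *\<^sub>v y) \<le> a^2 * (y \<bullet> y)"
begin

definition "S = 1\<^sub>m r + A\<^sup>T * A"
definition "B = Y + Y - 1\<^sub>m r"
definition "C = A * Y + A * Y"

lemma S: "S \<in> carrier_mat r r" unfolding S_def using A by simp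
lemma B: "B \<in> carrier_mat r r" unfolding B_def using Y by (intro minus_carrier_mat) auto
lemma C: "C \<in> carrier_mat m r" unfolding C_def using A Y by simp

lemma S_sym: "S\<^sup>T = S"
proof -
  have "S\<^sup>T = (1\<^sub>m r)\<^sup>T + (A\<^sup>T * A)\<^sup>T" unfolding S_def
    by (rule transpose_add[of _ r r]) (use A in auto)
  also have "(A\<^sup>T * A)\<^sup>T = A\<^sup>T * A" using transpose_mult[of "A\<^sup>T" r m A r] A by simp
  finally show ?thesis unfolding S_def by simp
qed

lemma Ysym: "Y\<^sup>T = Y" and YS: "Y * S = 1\<^sub>m r"
  using sym_inv[OF S Y _ S_sym] SY unfolding S_def by auto

lemma B_sym: "B\<^sup>T = B"
proof -
  have "B\<^sup>T = (Y + Y)\<^sup>T - (1\<^sub>m r)\<^sup>T" unfolding B_def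
    by (rule transpose_minus[of _ r r]) (use Y in auto)
  also have "(Y + Y)\<^sup>T = Y\<^sup>T + Y\<^sup>T" by (rule transpose_add[of _ r r]) (use Y in auto)
  finally show ?thesis unfolding B_def using Ysym by simp
qed

lemma C_eq: "C = A * (B + 1\<^sub>m r)"
proof -
  have "B + 1\<^sub>m r = Y + Y" unfolding B_def using Y
    by (intro eq_matI) auto
  thus ?thesis unfolding C_def using A Y by (simp add: mult_add_distrib_mat)
qed

definition "w x = Y *\<^sub>v x"
definition "u x = A *\<^sub>v w x"
definition "t x = A\<^sup>T *\<^sub>v u x"

context fixes x :: "real vec" assumes x: "x \<in> carrier_vec r" begin

lemma w: "(w x) \<in> carrier_vec r" unfolding w_def using Y x by simp
lemma u: "(u x) \<in> carrier_vec m" unfolding u_def using A w by simp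
lemma t: "(t x) \<in> carrier_vec r" unfolding t_def using A u by simp

lemma x_eq: "x = (w x) + (t x)"
proof -
  have "x = (S * Y) *\<^sub>v x" using SY x unfolding S_def by simp
  also have "\<dots> = S *\<^sub>v (w x)" unfolding w_def using S Y x by (rule assoc_mult_mat_vec)
  also have "\<dots> = (w x) + (A\<^sup>T * A) *\<^sub>v (w x)" unfolding S_def using A w
    by (simp add: add_mult_distrib_mat_vec[of "1\<^sub>m r" r r])
  also have "(A\<^sup>T * A) *\<^sub>v (w x) = (t x)" unfolding t_def u_def using A w by (simp add: assoc_mult_mat_vec)
  finally show ?thesis .
qed

lemma tw: "(t x) \<bullet> (w x) = (u x) \<bullet> (u x)"
  unfolding t_def using transpose_vec_mult_scalar[OF A w u] unfolding u_def by simp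

lemma xx: "x \<bullet> x = (w x) \<bullet> (w x) + 2 * ((u x) \<bullet> (u x)) + (t x) \<bullet> (t x)"
proof -
  have "x \<bullet> x = ((w x) + (t x)) \<bullet> ((w x) + (t x))" by (rule arg_cong2[where f="(\<bullet>)"]; rule x_eq)
  also have "\<dots> = (w x) \<bullet> (w x) + 2 * ((t x) \<bullet> (w x)) + (t x) \<bullet> (t x)" using w t
    by (simp add: add_scalar_prod_distrib[of _ r] scalar_prod_add_distrib[of _ r] comm_scalar_prod[of "w x" r "t x"])
  finally show ?thesis using tw by simp
qed

lemma Bx: "B *\<^sub>v x = (w x) + (w x) - x"
  unfolding B_def w_def using Y x
  by (simp add: minus_mult_distrib_mat_vec[of _ r r] add_mult_distrib_mat_vec[of _ r r])

lemma Cx: "C *\<^sub>v x = (u x) + (u x)"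
  unfolding C_def u_def w_def using A Y x
  by (simp add: add_mult_distrib_mat_vec[of _ m r] assoc_mult_mat_vec)

lemma xBx: "x \<bullet> (B *\<^sub>v x) = (w x) \<bullet> (w x) - (t x) \<bullet> (t x)"
proof -
  have "x \<bullet> (B *\<^sub>v x) = x \<bullet> (w x) + x \<bullet> (w x) - x \<bullet> x" unfolding Bx using x w
    by (simp add: scalar_prod_minus_distrib[of _ r] scalar_prod_add_distrib[of _ r])
  also have "x \<bullet> (w x) = ((w x) + (t x)) \<bullet> (w x)" by (rule arg_cong2[where f="(\<bullet>)"]; rule x_eq refl)
  also have "\<dots> = (w x) \<bullet> (w x) + (t x) \<bullet> (w x)"
    using w t by (simp add: add_scalar_prod_distrib[of _ r])
  finally show ?thesis using xx tw by simp
qed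

lemma CxCx: "(C *\<^sub>v x) \<bullet> (C *\<^sub>v x) = 4 * ((u x) \<bullet> (u x))"
  unfolding Cx using u by (simp add: add_scalar_prod_distrib[of _ m] scalar_prod_add_distrib[of _ m])

end

end

context blk begin

lemma uu_le: "x \<in> carrier_vec r \<Longrightarrow> u x \<bullet> u x \<le> a^2 * (w x \<bullet> w x)"
  unfolding u_def using Ax w by blast

lemma tt_le: "x \<in> carrier_vec r \<Longrightarrow> t x \<bullet> t x \<le> a^2 * (u x \<bullet> u x)"
  unfolding t_def using ATy u by blast

lemma B_pd: assumes x: "x \<in> carrier_vec r"
  shows "(1 - a^2) / (1 + a^2) * (x \<bullet> x) \<le> x \<bullet> (B *\<^sub>v x)"
proof -
  define c where "c = a^2"
  have c0: "0 \<le> c" unfolding c_def by simp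
  have h1: "u x \<bullet> u x \<le> c * (w x \<bullet> w x)" using uu_le[OF x] unfolding c_def .
  have h2: "t x \<bullet> t x \<le> c * (u x \<bullet> u x)" using tt_le[OF x] unfolding c_def .
  have "(1 - c) * (x \<bullet> x) \<le> (1 + c) * (x \<bullet> (B *\<^sub>v x))"
    unfolding xx[OF x] xBx[OF x] using h1 h2 by (simp add: algebra_simps)
  hence "(1 - c) * (x \<bullet> x) / (1 + c) \<le> x \<bullet> (B *\<^sub>v x)"
    using c0 by (simp add: divide_le_eq mult.commute)
  thus ?thesis unfolding c_def by simp
qed

lemma B_psd: assumes x: "x \<in> carrier_vec r" shows "0 * (x \<bullet> x) \<le> x \<bullet> (B *\<^sub>v x)"
proof -
  have "0 \<le> (1 - a^2) / (1 + a^2) * (x \<bullet> x)"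
    using a0 a1 sp_self_nonneg[of x] by (intro mult_nonneg_nonneg divide_nonneg_pos)
      (auto simp: power_le_one intro: add_pos_nonneg)
  thus ?thesis using B_pd[OF x] by simp
qed

lemma C_contr: assumes x: "x \<in> carrier_vec r" shows "(C *\<^sub>v x) \<bullet> (C *\<^sub>v x) \<le> 1 * (x \<bullet> x)"
proof -
  have cs: "t x \<bullet> w x \<le> sqrt (t x \<bullet> t x) * sqrt (w x \<bullet> w x)"
    using vec_cs[of "w x" "t x"] w[OF x] t[OF x] by simp
  have "2 * (sqrt (t x \<bullet> t x) * sqrt (w x \<bullet> w x)) \<le> t x \<bullet> t x + w x \<bullet> w x"
  proof -
    have "0 \<le> (sqrt (t x \<bullet> t x) - sqrt (w x \<bullet> w x))^2" by simp
    thus ?thesis using sp_self_nonneg[of "t x"] sp_self_nonneg[of "w x"]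
      by (simp add: power2_eq_square algebra_simps)
  qed
  with cs tw[OF x] have "2 * (u x \<bullet> u x) \<le> t x \<bullet> t x + w x \<bullet> w x" by simp
  thus ?thesis unfolding CxCx[OF x] xx[OF x] by simp
qed

lemma C_T: "C\<^sup>T = Y * A\<^sup>T + Y * A\<^sup>T"
proof -
  have "C\<^sup>T = (A * Y)\<^sup>T + (A * Y)\<^sup>T" unfolding C_def by (rule transpose_add[of _ m r]) (use A Y in auto)
  also have "(A * Y)\<^sup>T = Y * A\<^sup>T" using transpose_mult[OF A Y] Ysym by simp
  finally show ?thesis .
qed

lemma BC_orth: "B * B + C\<^sup>T * C = 1\<^sub>m r"
proof (rule mat_eq_one_vec)
  show "B * B + C\<^sup>T * C \<in> carrier_mat r r" using B C by simp
  fix x :: "real vec" assume x: "x \<in> carrier_vec r"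
  have wx: "w x \<in> carrier_vec r" using w[OF x] .
  have tx: "t x \<in> carrier_vec r" using t[OF x] .
  have ux: "u x \<in> carrier_vec m" using u[OF x] .
  define yw where "yw = Y *\<^sub>v w x"
  define yt where "yt = Y *\<^sub>v t x"
  have yw: "yw \<in> carrier_vec r" unfolding yw_def using Y wx by simp
  have yt: "yt \<in> carrier_vec r" unfolding yt_def using Y tx by simp
  have Bxc: "B *\<^sub>v x \<in> carrier_vec r" using B x by simp
  have e1: "w x = yw + yt"
  proof -
    have F: "Y *\<^sub>v x = Y *\<^sub>v (w x + t x)" using x_eq[OF x] by (rule arg_cong)
    have "w x = Y *\<^sub>v (w x + t x)" using F by (simp only: w_def)
    thus ?thesis unfolding yw_def yt_def using Y wx tx by (simp add: mult_add_distrib_mat_vec)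
  qed
  have e2: "B *\<^sub>v (B *\<^sub>v x) = (yw + yw - w x) + (yw + yw - w x) - (w x + w x - x)"
  proof -
    have "B *\<^sub>v (B *\<^sub>v x) = w (B *\<^sub>v x) + w (B *\<^sub>v x) - B *\<^sub>v x" by (rule Bx[OF Bxc])
    moreover have "w (B *\<^sub>v x) = yw + yw - w x"
      unfolding w_def Bx[OF x] yw_def using Y wx x
      by (simp add: w_def mult_minus_distrib_mat_vec[of _ r r] mult_add_distrib_mat_vec[of _ r r])
    ultimately show ?thesis using Bx[OF x] by simp
  qed
  have e3: "C\<^sup>T *\<^sub>v (C *\<^sub>v x) = (yt + yt) + (yt + yt)"
  proof -
    have "C\<^sup>T *\<^sub>v (C *\<^sub>v x) = (Y * A\<^sup>T + Y * A\<^sup>T) *\<^sub>v (u x + u x)" unfolding C_T Cx[OF x] ..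
    also have "\<dots> = (Y * A\<^sup>T) *\<^sub>v (u x + u x) + (Y * A\<^sup>T) *\<^sub>v (u x + u x)"
      using A Y ux by (simp add: add_mult_distrib_mat_vec[of _ r m])
    also have "(Y * A\<^sup>T) *\<^sub>v (u x + u x) = Y *\<^sub>v (A\<^sup>T *\<^sub>v (u x + u x))"
      using A Y ux by (simp add: assoc_mult_mat_vec)
    also have "A\<^sup>T *\<^sub>v (u x + u x) = t x + t x" unfolding t_def using A ux
      by (simp add: mult_add_distrib_mat_vec[of _ r m])
    also have "Y *\<^sub>v (t x + t x) = yt + yt" unfolding yt_def using Y tx
      by (simp add: mult_add_distrib_mat_vec[of _ r r])
    finally show ?thesis .
  qed
  have "(B * B + C\<^sup>T * C) *\<^sub>v x = B *\<^sub>v (B *\<^sub>v x) + C\<^sup>T *\<^sub>v (C *\<^sub>v x)"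
    using B C x by (simp add: add_mult_distrib_mat_vec[of _ r r] assoc_mult_mat_vec)
  also have "\<dots> = x" unfolding e2 e3
  proof (rule eq_vecI)
    fix i assume i: "i < dim_vec x"
    hence i': "i < r" using x by simp
    have "(w x) $ i = yw $ i + yt $ i" using e1 i' yw yt by (metis carrier_vecD index_add_vec(1))
    thus "((yw + yw - w x) + (yw + yw - w x) - (w x + w x - x) + (yt + yt + (yt + yt))) $ i = x $ i"
      using i' wx yw yt x by simp
  qed (use x yw yt wx in simp)
  finally show "(B * B + C\<^sup>T * C) *\<^sub>v x = x" .
qed

end

lemma split_sum: fixes f :: "nat \<Rightarrow> 'a::comm_monoid_add" and m r :: nat
  shows "(\<Sum>k<r+m. f k) = (\<Sum>k<r. f k) + (\<Sum>l<m. f (r+l))"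
  by (induct m) (auto simp: add.assoc)

lemma X_dims: assumes A: "A \<in> carrier_mat m r"
  shows "dim_row (Xmat A) = m + r" "dim_col (Xmat A) = m + r" "Xmat A \<in> carrier_mat (m+r) (m+r)"
proof -
  have d: "dim_row (Xmat A) = r + m" "dim_col (Xmat A) = r + m"
    using A unfolding Xmat_def by (simp_all add: carrier_matD)
  thus "dim_row (Xmat A) = m + r" "dim_col (Xmat A) = m + r" by simp_all
  thus "Xmat A \<in> carrier_mat (m+r) (m+r)" by (intro carrier_matI)
qed

lemma X_idx: assumes A: "A \<in> carrier_mat m r" and i: "i < m + r" and j: "j < m + r"
  shows "Xmat A $$ (i,j) = (if i < r then (if j < r then 0 else - A $$ (j-r,i))
                              else (if j < r then A $$ (i-r,j) else 0))"
  using A i j unfolding Xmat_def by auto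

lemma X_skew: assumes A: "A \<in> carrier_mat m r" and i: "i < m + r" and j: "j < m + r"
  shows "Xmat A $$ (j,i) = - Xmat A $$ (i,j)"
  using i j by (simp add: X_idx[OF A])

definition Yt :: "real mat \<Rightarrow> real mat" where
  "Yt A = minv (1\<^sub>m (dim_row A + dim_col A) - Xmat A)"

lemma Yt: assumes A: "A \<in> carrier_mat m r"
  shows "Yt A \<in> carrier_mat (m+r) (m+r)" "Yt A * (1\<^sub>m (m+r) - Xmat A) = 1\<^sub>m (m+r)"
    "(1\<^sub>m (m+r) - Xmat A) * Yt A = 1\<^sub>m (m+r)"
proof -
  let ?M = "1\<^sub>m (m+r) - Xmat A"
  have dr: "dim_row ?M = m + r" using X_dims[OF A] by simp
  have ex: "\<exists>W. W \<in> carrier_mat (m+r) (m+r) \<and> W * ?M = 1\<^sub>m (m+r) \<and> ?M * W = 1\<^sub>m (m+r)"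
    by (rule skew_inv_exists[OF X_dims(3)[OF A]]) (rule X_skew[OF A])
  have "Yt A = (SOME W. W \<in> carrier_mat (m+r) (m+r) \<and> W * ?M = 1\<^sub>m (m+r) \<and> ?M * W = 1\<^sub>m (m+r))"
    unfolding Yt_def minv_def dr using A X_dims[OF A] by simp
  with someI_ex[OF ex] show "Yt A \<in> carrier_mat (m+r) (m+r)" "Yt A * ?M = 1\<^sub>m (m+r)"
    "?M * Yt A = 1\<^sub>m (m+r)" by auto
qed

lemma Ipr_right: assumes M: "M \<in> carrier_mat n n" and i: "i < n" and j: "j < r" and rn: "r \<le> n"
  shows "(M * Ipr n r) $$ (i,j) = M $$ (i,j)"
proof -
  have "(M * Ipr n r) $$ (i,j) = (\<Sum>k\<in>{0..<n}. M $$ (i,k) * (if k = j then 1 else 0))"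
    using M i j rn unfolding Ipr_def by (auto simp: scalar_prod_def intro!: sum.cong)
  also have "\<dots> = M $$ (i,j)" using j rn by (simp add: if_distrib[of "(*) _"] sum.delta cong: if_cong)
  finally show ?thesis .
qed

lemma U_idx: assumes A: "A \<in> carrier_mat m r"
  shows "cayleyU A \<in> carrier_mat (m+r) r"
    "\<And>i j. i < m + r \<Longrightarrow> j < r \<Longrightarrow> cayleyU A $$ (i,j) = 2 * Yt A $$ (i,j) - (if i = j then 1 else 0)"
proof -
  let ?X = "Xmat A" and ?W = "Yt A" and ?n = "m + r"
  have X: "?X \<in> carrier_mat ?n ?n" by (rule X_dims(3)[OF A])
  have W: "?W \<in> carrier_mat ?n ?n" by (rule Yt(1)[OF A])
  have U: "cayleyU A = (1\<^sub>m ?n + ?X) * ?W * Ipr ?n r"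
    unfolding cayleyU_def Yt_def Let_def using A by simp
  have PW: "(1\<^sub>m ?n + ?X) * ?W = ?W + ?X * ?W"
    using X W by (simp add: add_mult_distrib_mat[of _ ?n ?n])
  have MW: "(1\<^sub>m ?n - ?X) * ?W = ?W - ?X * ?W"
    using X W by (simp add: minus_mult_distrib_mat[of _ ?n ?n])
  have e: "(?W - ?X * ?W) $$ (i,j) = (if i = j then 1 else 0)" if "i < ?n" "j < ?n" for i j
    using Yt(3)[OF A] MW that by (metis index_one_mat(1))
  have P: "((1\<^sub>m ?n + ?X) * ?W) $$ (i,j) = 2 * ?W $$ (i,j) - (if i = j then 1 else 0)"
    if "i < ?n" "j < ?n" for i j
    using e[OF that] that X W unfolding PW by simp
  have PWc: "(1\<^sub>m ?n + ?X) * ?W \<in> carrier_mat ?n ?n"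
    by (rule mult_carrier_mat[OF add_carrier_mat[OF X] W])
  have Ic: "Ipr ?n r \<in> carrier_mat ?n r" unfolding Ipr_def by simp
  show "cayleyU A \<in> carrier_mat ?n r" unfolding U by (rule mult_carrier_mat[OF PWc Ic])
  fix i j assume i: "i < ?n" and j: "j < r"
  have "cayleyU A $$ (i,j) = ((1\<^sub>m ?n + ?X) * ?W) $$ (i,j)"
    unfolding U by (rule Ipr_right) (use X W i j in auto)
  also have "\<dots> = 2 * ?W $$ (i,j) - (if i = j then 1 else 0)" using P i j by simp
  finally show "cayleyU A $$ (i,j) = 2 * Yt A $$ (i,j) - (if i = j then 1 else 0)" .
qed

lemma XW_idx: assumes A: "A \<in> carrier_mat m r" and W: "W \<in> carrier_mat (m+r) (m+r)"
  and i: "i < m + r" and j: "j < m + r"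
  shows "(Xmat A * W) $$ (i,j) = (\<Sum>k<r+m. Xmat A $$ (i,k) * W $$ (k,j))"
  using A W i j X_dims[OF A] by (simp add: scalar_prod_def atLeast0LessThan add.commute)

lemma cayley_blk: assumes A: "A \<in> carrier_mat m r"
  shows "\<exists>Y. Y \<in> carrier_mat r r \<and> (1\<^sub>m r + A\<^sup>T * A) * Y = 1\<^sub>m r
    \<and> (\<forall>i<r. \<forall>j<r. cayleyU A $$ (i,j) = (Y + Y - 1\<^sub>m r) $$ (i,j))
    \<and> (\<forall>q<m. \<forall>j<r. cayleyU A $$ (r+q,j) = (A * Y + A * Y) $$ (q,j))"
proof -
  let ?X = "Xmat A" and ?W = "Yt A" and ?n = "m + r"
  have X: "?X \<in> carrier_mat ?n ?n" by (rule X_dims(3)[OF A])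
  have W: "?W \<in> carrier_mat ?n ?n" by (rule Yt(1)[OF A])
  have MW: "(1\<^sub>m ?n - ?X) * ?W = ?W - ?X * ?W"
    using X W by (simp add: minus_mult_distrib_mat[of _ ?n ?n])
  have e: "?W $$ (i,j) - (?X * ?W) $$ (i,j) = (if i = j then 1 else 0)" if "i < ?n" "j < ?n" for i j
  proof -
    have "(?W - ?X * ?W) $$ (i,j) = (if i = j then 1 else 0)"
      using Yt(3)[OF A] MW that by (metis index_one_mat(1))
    thus ?thesis using that X W by simp
  qed
  define Y where "Y = mat r r (\<lambda>(i,j). ?W $$ (i,j))"
  define Y2 where "Y2 = mat m r (\<lambda>(i,j). ?W $$ (r+i,j))"
  have Yc: "Y \<in> carrier_mat r r" unfolding Y_def by simp
  have Y2c: "Y2 \<in> carrier_mat m r" unfolding Y2_def by simp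
  have bot: "Y2 = A * Y"
  proof (rule eq_matI)
    fix q j assume q: "q < dim_row (A * Y)" and j: "j < dim_col (A * Y)"
    hence q': "q < m" and j': "j < r" using A Yc by auto
    have "(?X * ?W) $$ (r+q,j) = (\<Sum>k<r+m. ?X $$ (r+q,k) * ?W $$ (k,j))"
      by (rule XW_idx[OF A W]) (use q' j' in auto)
    also have "\<dots> = (\<Sum>k<r. A $$ (q,k) * ?W $$ (k,j))"
      unfolding split_sum using q' by (simp add: X_idx[OF A])
    also have "\<dots> = (A * Y) $$ (q,j)"
      using A q' j' unfolding Y_def by (simp add: scalar_prod_def atLeast0LessThan)
    finally have "(?X * ?W) $$ (r+q,j) = (A * Y) $$ (q,j)" .
    moreover have "?W $$ (r+q,j) - (?X * ?W) $$ (r+q,j) = 0" using e[of "r+q" j] q' j' by simp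
    ultimately show "Y2 $$ (q,j) = (A * Y) $$ (q,j)" unfolding Y2_def using q' j' by simp
  qed (use A Yc Y2c in auto)
  have top: "(1\<^sub>m r + A\<^sup>T * A) * Y = 1\<^sub>m r"
  proof -
    have "(1\<^sub>m r + A\<^sup>T * A) * Y = Y + A\<^sup>T * Y2"
      unfolding bot using A Yc by (simp add: add_mult_distrib_mat[of _ r r] assoc_mult_mat[of _ r m _ r _ r])
    also have "\<dots> = 1\<^sub>m r"
    proof (rule eq_matI)
      fix i j assume i: "i < dim_row (1\<^sub>m r :: real mat)" and j: "j < dim_col (1\<^sub>m r :: real mat)"
      hence i': "i < r" and j': "j < r" by auto
      have "(?X * ?W) $$ (i,j) = (\<Sum>k<r+m. ?X $$ (i,k) * ?W $$ (k,j))"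
        by (rule XW_idx[OF A W]) (use i' j' in auto)
      also have "\<dots> = - (\<Sum>l<m. A $$ (l,i) * ?W $$ (r+l,j))"
        unfolding split_sum using i' by (simp add: X_idx[OF A] sum_negf)
      also have "(\<Sum>l<m. A $$ (l,i) * ?W $$ (r+l,j)) = (A\<^sup>T * Y2) $$ (i,j)"
        using A i' j' unfolding Y2_def by (simp add: scalar_prod_def atLeast0LessThan)
      finally have "(?X * ?W) $$ (i,j) = - (A\<^sup>T * Y2) $$ (i,j)" .
      thus "(Y + A\<^sup>T * Y2) $$ (i,j) = 1\<^sub>m r $$ (i,j)"
        using e[of i j] i' j' A Y2c unfolding Y_def by simp
    qed (use A Y2c Yc in auto)
    finally show ?thesis .
  qed
  have U1: "cayleyU A $$ (i,j) = (Y + Y - 1\<^sub>m r) $$ (i,j)" if "i < r" "j < r" for i j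
    using that U_idx(2)[OF A, of i j] Yc unfolding Y_def by simp
  have U2: "cayleyU A $$ (r+q,j) = (A * Y + A * Y) $$ (q,j)" if "q < m" "j < r" for q j
  proof -
    have "cayleyU A $$ (r+q,j) = 2 * Y2 $$ (q,j)"
      using that U_idx(2)[OF A, of "r+q" j] unfolding Y2_def by simp
    thus ?thesis unfolding bot using that A Yc by simp
  qed
  show ?thesis using Yc top U1 U2 by blast
qed

lemma stack:
  fixes U B C :: "real mat"
  assumes U: "U \<in> carrier_mat (m+r) r" and B: "B \<in> carrier_mat r r" and C: "C \<in> carrier_mat m r"
    and U1: "\<And>i j. i < r \<Longrightarrow> j < r \<Longrightarrow> U $$ (i,j) = B $$ (i,j)"
    and U2: "\<And>q j. q < m \<Longrightarrow> j < r \<Longrightarrow> U $$ (r+q,j) = C $$ (q,j)"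
  shows "U\<^sup>T * U = B\<^sup>T * B + C\<^sup>T * C"
    "\<And>i j. i < r \<Longrightarrow> j < r \<Longrightarrow> (U * U\<^sup>T) $$ (i,j) = (B * B\<^sup>T) $$ (i,j)"
    "\<And>q j. q < m \<Longrightarrow> j < r \<Longrightarrow> (U * U\<^sup>T) $$ (r+q,j) = (C * B\<^sup>T) $$ (q,j)"
proof -
  show "U\<^sup>T * U = B\<^sup>T * B + C\<^sup>T * C"
  proof (rule eq_matI)
    fix i j assume "i < dim_row (B\<^sup>T * B + C\<^sup>T * C)" "j < dim_col (B\<^sup>T * B + C\<^sup>T * C)"
    hence i: "i < r" and j: "j < r" using B C by auto
    have "(U\<^sup>T * U) $$ (i,j) = (\<Sum>k<r+m. U $$ (k,i) * U $$ (k,j))"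
      using U i j by (simp add: scalar_prod_def atLeast0LessThan add.commute)
    also have "\<dots> = (\<Sum>k<r. B $$ (k,i) * B $$ (k,j)) + (\<Sum>l<m. C $$ (l,i) * C $$ (l,j))"
      unfolding split_sum using i j by (simp add: U1 U2)
    also have "\<dots> = (B\<^sup>T * B + C\<^sup>T * C) $$ (i,j)"
      using B C i j by (simp add: scalar_prod_def atLeast0LessThan)
    finally show "(U\<^sup>T * U) $$ (i,j) = (B\<^sup>T * B + C\<^sup>T * C) $$ (i,j)" .
  qed (use U B C in auto)
  show "(U * U\<^sup>T) $$ (i,j) = (B * B\<^sup>T) $$ (i,j)" if i: "i < r" and j: "j < r" for i j
    using U B i j by (simp add: scalar_prod_def atLeast0LessThan U1)
  show "(U * U\<^sup>T) $$ (r+q,j) = (C * B\<^sup>T) $$ (q,j)" if q: "q < m" and j: "j < r" for q j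
    using U B C q j by (simp add: scalar_prod_def atLeast0LessThan U1 U2)
qed

lemma orth_norm:
  fixes U :: "real mat"
  assumes U: "U \<in> carrier_mat n r" and UU: "U\<^sup>T * U = 1\<^sub>m r" and x: "x \<in> carrier_vec r"
  shows "(U *\<^sub>v x) \<bullet> (U *\<^sub>v x) = x \<bullet> x"
proof -
  have Ux: "U *\<^sub>v x \<in> carrier_vec n" using U x by simp
  have "(U\<^sup>T *\<^sub>v (U *\<^sub>v x)) \<bullet> x = (U *\<^sub>v x) \<bullet> (U *\<^sub>v x)" by (rule transpose_vec_mult_scalar[OF U x Ux])
  moreover have "U\<^sup>T *\<^sub>v (U *\<^sub>v x) = x" using UU U x by (simp add: assoc_mult_mat_vec[symmetric, of _ r n])
  ultimately show ?thesis by simp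
qed

lemma transpose_bound:
  fixes A :: "real mat"
  assumes A: "A \<in> carrier_mat k n" and c: "0 \<le> c"
    and h: "\<And>x. x \<in> carrier_vec n \<Longrightarrow> (A *\<^sub>v x) \<bullet> (A *\<^sub>v x) \<le> c^2 * (x \<bullet> x)"
    and y: "y \<in> carrier_vec k"
  shows "(A\<^sup>T *\<^sub>v y) \<bullet> (A\<^sup>T *\<^sub>v y) \<le> c^2 * (y \<bullet> y)"
proof -
  define z where "z = A\<^sup>T *\<^sub>v y"
  have z: "z \<in> carrier_vec n" unfolding z_def using A y by simp
  have Az: "A *\<^sub>v z \<in> carrier_vec k" using A z by simp
  have "z \<bullet> z = y \<bullet> (A *\<^sub>v z)" unfolding z_def[symmetric, THEN sym] 
    using transpose_vec_mult_scalar[OF A z y] unfolding z_def by simp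
  also have "\<dots> \<le> sqrt (y \<bullet> y) * sqrt ((A *\<^sub>v z) \<bullet> (A *\<^sub>v z))" by (rule vec_cs) (use y A in simp)
  also have "sqrt ((A *\<^sub>v z) \<bullet> (A *\<^sub>v z)) \<le> c * sqrt (z \<bullet> z)"
  proof -
    have "sqrt ((A *\<^sub>v z) \<bullet> (A *\<^sub>v z)) \<le> sqrt (c^2 * (z \<bullet> z))" using h[OF z] by simp
    thus ?thesis using c by (simp add: real_sqrt_mult)
  qed
  hence "sqrt (y \<bullet> y) * sqrt ((A *\<^sub>v z) \<bullet> (A *\<^sub>v z)) \<le> sqrt (y \<bullet> y) * (c * sqrt (z \<bullet> z))"
    by (rule mult_left_mono) (simp add: sp_self_nonneg)
  finally have le: "z \<bullet> z \<le> sqrt (y \<bullet> y) * (c * sqrt (z \<bullet> z))" .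
  have zz: "z \<bullet> z = sqrt (z \<bullet> z) * sqrt (z \<bullet> z)" using sp_self_nonneg[of z] by simp
  have "sqrt (z \<bullet> z) \<le> c * sqrt (y \<bullet> y)"
  proof (cases "sqrt (z \<bullet> z) = 0")
    case True thus ?thesis using c sp_self_nonneg[of y] by simp
  next
    case False
    hence pos: "0 < sqrt (z \<bullet> z)" using sp_self_nonneg[of z] by simp
    from le zz have "sqrt (z \<bullet> z) * sqrt (z \<bullet> z) \<le> (c * sqrt (y \<bullet> y)) * sqrt (z \<bullet> z)"
      by (simp add: mult_ac)
    thus ?thesis using pos by (metis mult_le_cancel_right_pos)
  qed
  hence "(sqrt (z \<bullet> z))^2 \<le> (c * sqrt (y \<bullet> y))^2" by (intro power_mono) (auto simp: sp_self_nonneg)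
  thus ?thesis unfolding z_def using sp_self_nonneg[of y] sp_self_nonneg[of "A\<^sup>T *\<^sub>v y"]
    by (simp add: power_mult_distrib)
qed

lemma orth_T_contr:
  fixes U :: "real mat"
  assumes U: "U \<in> carrier_mat n r" and UU: "U\<^sup>T * U = 1\<^sub>m r" and y: "y \<in> carrier_vec n"
  shows "(U\<^sup>T *\<^sub>v y) \<bullet> (U\<^sup>T *\<^sub>v y) \<le> y \<bullet> y"
  using transpose_bound[OF U _ _ y, of 1] orth_norm[OF U UU] by simp

lemma vnorm2_nonneg: "0 \<le> vnorm2 x" unfolding vnorm2_alt by (simp add: sp_self_nonneg)

lemma spec_bound:
  fixes A :: "real mat"
  assumes A: "A \<in> carrier_mat k n" and n: "1 \<le> n"
  shows "0 \<le> spec_norm A"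
    "\<And>x. x \<in> carrier_vec n \<Longrightarrow> (A *\<^sub>v x) \<bullet> (A *\<^sub>v x) \<le> (spec_norm A)^2 * (x \<bullet> x)"
proof -
  define S where "S = {vnorm2 (A *\<^sub>v x) | x. x \<in> carrier_vec n \<and> vnorm2 x = 1}"
  have sn: "spec_norm A = Sup S" unfolding spec_norm_def S_def using A by simp
  define K where "K = sqrt (\<Sum>i<k. (\<Sum>j<n. \<bar>A $$ (i,j)\<bar>)^2)"
  have bnd: "vnorm2 (A *\<^sub>v x) \<le> K" if x: "x \<in> carrier_vec n" "vnorm2 x = 1" for x
  proof -
    have xx: "x \<bullet> x = 1" using x(2) unfolding vnorm2_alt using sp_self_nonneg[of x] by simp
    have xj: "\<bar>x $ j\<bar> \<le> 1" if j: "j < n" for j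
    proof -
      have "x $ j * x $ j \<le> (\<Sum>i\<in>{0..<n}. x $ i * x $ i)"
        by (rule member_le_sum) (use j in auto)
      hence "(x $ j)^2 \<le> (\<Sum>i\<in>{0..<n}. x $ i * x $ i)" by (simp add: power2_eq_square)
      also have "\<dots> = 1" using xx x(1) unfolding scalar_prod_def by simp
      finally show ?thesis by (simp add: abs_square_le_1)
    qed
    have "(A *\<^sub>v x) \<bullet> (A *\<^sub>v x) = (\<Sum>i<k. (\<Sum>j<n. A $$ (i,j) * x $ j)^2)"
      using A x(1) by (simp add: scalar_prod_def atLeast0LessThan power2_eq_square)
    also have "\<dots> \<le> (\<Sum>i<k. (\<Sum>j<n. \<bar>A $$ (i,j)\<bar>)^2)"
    proof (rule sum_mono)
      fix i assume "i \<in> {..<k}"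
      have "\<bar>\<Sum>j<n. A $$ (i,j) * x $ j\<bar> \<le> (\<Sum>j<n. \<bar>A $$ (i,j) * x $ j\<bar>)" by (rule sum_abs)
      also have "\<dots> \<le> (\<Sum>j<n. \<bar>A $$ (i,j)\<bar>)"
        by (rule sum_mono) (use xj in \<open>auto simp: abs_mult intro: mult_left_le\<close>)
      finally have "\<bar>\<Sum>j<n. A $$ (i,j) * x $ j\<bar> \<le> (\<Sum>j<n. \<bar>A $$ (i,j)\<bar>)" .
      thus "(\<Sum>j<n. A $$ (i,j) * x $ j)^2 \<le> (\<Sum>j<n. \<bar>A $$ (i,j)\<bar>)^2"
        by (metis abs_ge_zero abs_le_square_iff abs_of_nonneg order_trans sum_nonneg power2_abs)
    qed
    finally show ?thesis unfolding vnorm2_alt K_def by (rule real_sqrt_le_mono)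
  qed
  have bdd: "bdd_above S" unfolding S_def bdd_above_def using bnd by blast
  define e :: "real vec" where "e = unit_vec n 0"
  have e: "e \<in> carrier_vec n" "vnorm2 e = 1" unfolding e_def vnorm2_alt using n
    by (auto simp: scalar_prod_right_unit)
  have up: "vnorm2 (A *\<^sub>v x) \<le> spec_norm A" if "x \<in> carrier_vec n" "vnorm2 x = 1" for x
    unfolding sn by (rule cSup_upper[OF _ bdd]) (use that in \<open>auto simp: S_def\<close>)
  show s0: "0 \<le> spec_norm A" using up[OF e] vnorm2_nonneg[of "A *\<^sub>v e"] by linarith
  fix x :: "real vec" assume x: "x \<in> carrier_vec n"
  show "(A *\<^sub>v x) \<bullet> (A *\<^sub>v x) \<le> (spec_norm A)^2 * (x \<bullet> x)"
  proof (cases "vnorm2 x = 0")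
    case True
    hence "x \<bullet> x = 0" unfolding vnorm2_alt using sp_self_nonneg[of x] by simp
    hence "\<forall>i\<in>{0..<n}. x $ i * x $ i = 0" using x unfolding scalar_prod_def
      by (subst (asm) sum_nonneg_eq_0_iff) auto
    hence "x = 0\<^sub>v n" using x by (intro eq_vecI) auto
    hence "A *\<^sub>v x = 0\<^sub>v k" using A by (intro eq_vecI) (auto simp: scalar_prod_def)
    thus ?thesis using x sp_self_nonneg[of x] by simp
  next
    case False
    define c where "c = vnorm2 x"
    have c: "0 < c" unfolding c_def using False vnorm2_nonneg[of x] by simp
    define y where "y = (1/c) \<cdot>\<^sub>v x"
    have y: "y \<in> carrier_vec n" unfolding y_def using x by simp
    have "y \<bullet> y = (1/c)^2 * (x \<bullet> x)" unfolding y_def using x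
      by (simp add: power2_eq_square)
    also have "x \<bullet> x = c^2" unfolding c_def vnorm2_alt using sp_self_nonneg[of x] by simp
    finally have "y \<bullet> y = 1" using c by (simp add: power2_eq_square)
    hence "vnorm2 y = 1" unfolding vnorm2_alt by simp
    hence "vnorm2 (A *\<^sub>v y) \<le> spec_norm A" by (rule up[OF y])
    moreover have "A *\<^sub>v y = (1/c) \<cdot>\<^sub>v (A *\<^sub>v x)" unfolding y_def using A x by (simp add: mult_mat_vec)
    moreover have "vnorm2 ((1/c) \<cdot>\<^sub>v (A *\<^sub>v x)) = vnorm2 (A *\<^sub>v x) / c"
      unfolding vnorm2_alt using c A x by (simp add: real_sqrt_divide)
    ultimately have "vnorm2 (A *\<^sub>v x) / c \<le> spec_norm A" by simp
    hence "vnorm2 (A *\<^sub>v x) \<le> spec_norm A * c" using c by (simp add: divide_le_eq)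
    hence "(vnorm2 (A *\<^sub>v x))^2 \<le> (spec_norm A * c)^2" by (intro power_mono) (auto simp: vnorm2_nonneg)
    thus ?thesis unfolding c_def vnorm2_alt using sp_self_nonneg[of x] sp_self_nonneg[of "A *\<^sub>v x"]
      by (simp add: power_mult_distrib)
  qed
qed

lemma sum_mod_div: fixes g :: "nat \<Rightarrow> nat \<Rightarrow> real"
  shows "(\<Sum>k<m*r. g (k mod m) (k div m)) = (\<Sum>j<r. \<Sum>i<m. g i j)"
proof (induct r)
  case 0 thus ?case by simp
next
  case (Suc r)
  have "(\<Sum>k<m * Suc r. g (k mod m) (k div m)) = (\<Sum>k<m*r + m. g (k mod m) (k div m))"
    by (simp add: add.commute)
  also have "\<dots> = (\<Sum>k<m*r. g (k mod m) (k div m)) + (\<Sum>l<m. g ((m*r+l) mod m) ((m*r+l) div m))"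
    by (rule split_sum)
  also have "(\<Sum>l<m. g ((m*r+l) mod m) ((m*r+l) div m)) = (\<Sum>l<m. g l r)"
    by (intro sum.cong refl) auto
  finally show ?case using Suc by simp
qed

lemma vecm_fn: assumes A: "A \<in> carrier_mat m r" and A0: "A0 \<in> carrier_mat m r"
  shows "vnorm2 (vecm A - vecm A0) = fn (A - A0)"
proof -
  have "vnorm2 (vecm A - vecm A0) = sqrt (\<Sum>k<m*r. (A $$ (k mod m, k div m) - A0 $$ (k mod m, k div m))^2)"
    unfolding vnorm2_def vecm_def using A A0 by (intro arg_cong[where f=sqrt] sum.cong) auto
  also have "\<dots> = sqrt (\<Sum>j<r. \<Sum>i<m. (A $$ (i,j) - A0 $$ (i,j))^2)"
    by (subst sum_mod_div) rule
  also have "\<dots> = fn (A - A0)" unfolding fn_def fro2_def mip_def using A A0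
    by (simp add: power2_eq_square) (rule sum.swap)
  finally show ?thesis .
qed

lemma fro2_X: assumes A: "A \<in> carrier_mat m r" and A0: "A0 \<in> carrier_mat m r"
  shows "fro2 (Xmat A - Xmat A0) = 2 * fro2 (A - A0)"
proof -
  have XA: "Xmat A \<in> carrier_mat (m+r) (m+r)" by (rule X_dims(3)[OF A])
  have XA0: "Xmat A0 \<in> carrier_mat (m+r) (m+r)" by (rule X_dims(3)[OF A0])
  define f where "f i j = (Xmat A $$ (i,j) - Xmat A0 $$ (i,j))^2" for i j
  have "fro2 (Xmat A - Xmat A0) = (\<Sum>i<r+m. \<Sum>j<r+m. f i j)"
    unfolding fro2_def mip_def f_def using XA XA0 by (simp add: power2_eq_square add.commute)
  also have "\<dots> = (\<Sum>i<r. \<Sum>l<m. (A $$ (l,i) - A0 $$ (l,i))^2) + (\<Sum>q<m. \<Sum>j<r. (A $$ (q,j) - A0 $$ (q,j))^2)"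
    unfolding split_sum f_def by (simp add: X_idx[OF A] X_idx[OF A0] sum.distrib power2_eq_square algebra_simps)
  also have "(\<Sum>i<r. \<Sum>l<m. (A $$ (l,i) - A0 $$ (l,i))^2) = (\<Sum>q<m. \<Sum>j<r. (A $$ (q,j) - A0 $$ (q,j))^2)"
    by (rule sum.swap)
  also have "(\<Sum>q<m. \<Sum>j<r. (A $$ (q,j) - A0 $$ (q,j))^2) = fro2 (A - A0)"
    unfolding fro2_def mip_def using A A0 by (simp add: power2_eq_square)
  finally show ?thesis by simp
qed

lemma Yt_diff: assumes A: "A \<in> carrier_mat m r" and A0: "A0 \<in> carrier_mat m r"
  shows "Yt A - Yt A0 = Yt A * (Xmat A - Xmat A0) * Yt A0"
proof -
  let ?n = "m + r"
  let ?W = "Yt A"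
  let ?Wo = "Yt A0"
  let ?M = "1\<^sub>m ?n - Xmat A"
  let ?Mo = "1\<^sub>m ?n - Xmat A0"
  have W: "?W \<in> carrier_mat ?n ?n" using Yt(1)[OF A] .
  have W0: "?Wo \<in> carrier_mat ?n ?n" by (rule Yt(1)) (rule A0)
  have XA: "Xmat A \<in> carrier_mat ?n ?n" using X_dims(3)[OF A] .
  have XA0: "Xmat A0 \<in> carrier_mat ?n ?n" by (rule X_dims(3)) (rule A0)
  have M: "?M \<in> carrier_mat ?n ?n" using XA by (rule minus_carrier_mat)
  have M0: "?Mo \<in> carrier_mat ?n ?n" using XA0 by (rule minus_carrier_mat)
  have d: "Xmat A - Xmat A0 = ?Mo - ?M" using XA XA0 by (intro eq_matI) auto
  have "?W * (?Mo - ?M) * ?Wo = (?W * ?Mo - ?W * ?M) * ?Wo"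
    using W M M0 by (simp add: mult_minus_distrib_mat[of _ ?n ?n])
  also have "\<dots> = ?W * ?Mo * ?Wo - ?W * ?M * ?Wo"
    using W M M0 W0 by (simp add: minus_mult_distrib_mat[of _ ?n ?n])
  also have "?W * ?Mo * ?Wo = ?W" using W M0 W0 Yt(3)[OF A0] by (simp add: assoc_mult_mat[of _ ?n ?n])
  also have "?W * ?M * ?Wo = ?Wo" using Yt(2)[OF A] W0 by simp
  finally show ?thesis unfolding d by simp
qed

lemma Yt_contr: assumes A: "A \<in> carrier_mat m r" and z: "z \<in> carrier_vec (m+r)"
  shows "(Yt A *\<^sub>v z) \<bullet> (Yt A *\<^sub>v z) \<le> 1 * (z \<bullet> z)"
  using skew_inv_contr[OF X_dims(3)[OF A] X_skew[OF A] Yt(1)[OF A] Yt(3)[OF A] z] by simp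

lemma YtT_contr: assumes A: "A \<in> carrier_mat m r" and z: "z \<in> carrier_vec (m+r)"
  shows "((Yt A)\<^sup>T *\<^sub>v z) \<bullet> ((Yt A)\<^sup>T *\<^sub>v z) \<le> 1 * (z \<bullet> z)"
proof -
  let ?n = "m + r"
  have XA: "Xmat A \<in> carrier_mat ?n ?n" by (rule X_dims(3)[OF A])
  have W: "Yt A \<in> carrier_mat ?n ?n" by (rule Yt(1)[OF A])
  have K: "- Xmat A \<in> carrier_mat ?n ?n" using XA by simp
  have sk: "(- Xmat A) $$ (j,i) = - (- Xmat A) $$ (i,j)" if "i < ?n" "j < ?n" for i j
    using X_skew[OF A that] that XA by simp
  have e: "1\<^sub>m ?n - (- Xmat A) = (1\<^sub>m ?n - Xmat A)\<^sup>T"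
  proof (rule eq_matI)
    fix i j assume "i < dim_row ((1\<^sub>m ?n - Xmat A)\<^sup>T)" "j < dim_col ((1\<^sub>m ?n - Xmat A)\<^sup>T)"
    hence i: "i < ?n" and j: "j < ?n" using XA by auto
    show "(1\<^sub>m ?n - (- Xmat A)) $$ (i,j) = (1\<^sub>m ?n - Xmat A)\<^sup>T $$ (i,j)"
      using i j XA X_skew[OF A i j] by auto
  qed (use XA in auto)
  have "(1\<^sub>m ?n - (- Xmat A)) * (Yt A)\<^sup>T = (Yt A * (1\<^sub>m ?n - Xmat A))\<^sup>T"
    unfolding e using W XA by (simp add: transpose_mult[of _ ?n ?n _ ?n] minus_carrier_mat)
  also have "\<dots> = 1\<^sub>m ?n" using Yt(2)[OF A] by simp
  finally have inv: "(1\<^sub>m ?n - (- Xmat A)) * (Yt A)\<^sup>T = 1\<^sub>m ?n" .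
  show ?thesis using skew_inv_contr[OF K sk _ inv z] W by simp
qed

lemma mip_one: assumes M: "M \<in> carrier_mat r r" shows "mip M (1\<^sub>m r) = mtr M"
proof -
  have "(\<Sum>j<r. M $$ (i,j) * 1\<^sub>m r $$ (i,j)) = M $$ (i,i)" if i: "i < r" for i
  proof -
    have "(\<Sum>j<r. M $$ (i,j) * 1\<^sub>m r $$ (i,j)) = (\<Sum>j<r. if j = i then M $$ (i,i) else 0)"
      by (intro sum.cong) (use i in auto)
    also have "\<dots> = M $$ (i,i)" using i by simp
    finally show ?thesis .
  qed
  thus ?thesis unfolding mip_def mtr_def using M by simp
qed

lemma mtr_one: "mtr (1\<^sub>m r :: real mat) = real r" unfolding mtr_def by simp

lemma fro2_orth: assumes U: "U \<in> carrier_mat n r" and UU: "U\<^sup>T * U = 1\<^sub>m r"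
  shows "fro2 U = real r"
  using mtr_fro2[OF U] UU mtr_one by simp

lemma mip_mtr: assumes U: "U \<in> carrier_mat n r" and V: "V \<in> carrier_mat n r"
  shows "mip U V = mtr (U\<^sup>T * V)"
  using U V unfolding mip_def mtr_def by (simp add: scalar_prod_def atLeast0LessThan) (rule sum.swap)

lemma sin_le_diff:
  fixes U V :: "real mat"
  assumes U: "U \<in> carrier_mat n r" and V: "V \<in> carrier_mat n r"
    and UU: "U\<^sup>T * U = 1\<^sub>m r" and VV: "V\<^sup>T * V = 1\<^sub>m r"
  shows "real r - fro2 (U\<^sup>T * V) \<le> fro2 (U - V)"
proof -
  let ?M = "U\<^sup>T * V"
  have M: "?M \<in> carrier_mat r r" using U V by simp
  have "0 \<le> fro2 (?M - 1\<^sub>m r)" by (rule fro2_nonneg)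
  also have "fro2 (?M - 1\<^sub>m r) = fro2 ?M - 2 * mip ?M (1\<^sub>m r) + fro2 (1\<^sub>m r)"
    by (rule fro2_minus[OF M]) simp
  also have "mip ?M (1\<^sub>m r) = mtr ?M" by (rule mip_one[OF M])
  also have "fro2 (1\<^sub>m r :: real mat) = real r" unfolding fro2_def using mip_one[of "1\<^sub>m r" r] mtr_one by simp
  finally have h: "0 \<le> fro2 ?M - 2 * mtr ?M + real r" .
  have "fro2 (U - V) = fro2 U - 2 * mip U V + fro2 V" by (rule fro2_minus[OF U V])
  also have "\<dots> = 2 * real r - 2 * mtr ?M" using fro2_orth[OF U UU] fro2_orth[OF V VV] mip_mtr[OF U V] by simp
  finally show ?thesis using h by simp
qed

lemma quad_swap:
  fixes a b :: "nat \<Rightarrow> nat \<Rightarrow> real"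
  shows "(\<Sum>i<n. \<Sum>k<n. (\<Sum>j<r. a i j * a k j) * (\<Sum>l<r. b i l * b k l))
       = (\<Sum>j<r. \<Sum>l<r. (\<Sum>i<n. a i j * b i l)^2)"
proof -
  define f where "f i k j l = a i j * a k j * (b i l * b k l)" for i k j l
  have L: "(\<Sum>i<n. \<Sum>k<n. (\<Sum>j<r. a i j * a k j) * (\<Sum>l<r. b i l * b k l))
      = (\<Sum>i<n. \<Sum>k<n. \<Sum>j<r. \<Sum>l<r. f i k j l)"
    unfolding f_def by (simp add: sum_product)
  have R: "(\<Sum>j<r. \<Sum>l<r. (\<Sum>i<n. a i j * b i l)^2) = (\<Sum>j<r. \<Sum>l<r. \<Sum>i<n. \<Sum>k<n. f i k j l)"
    unfolding f_def power2_eq_square by (simp add: sum_product mult_ac)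
  have "(\<Sum>j<r. \<Sum>l<r. \<Sum>i<n. \<Sum>k<n. f i k j l) = (\<Sum>j<r. \<Sum>i<n. \<Sum>l<r. \<Sum>k<n. f i k j l)"
    by (rule sum.cong[OF refl], rule sum.swap)
  also have "\<dots> = (\<Sum>i<n. \<Sum>j<r. \<Sum>l<r. \<Sum>k<n. f i k j l)" by (rule sum.swap)
  also have "\<dots> = (\<Sum>i<n. \<Sum>j<r. \<Sum>k<n. \<Sum>l<r. f i k j l)"
    by (rule sum.cong[OF refl], rule sum.cong[OF refl], rule sum.swap)
  also have "\<dots> = (\<Sum>i<n. \<Sum>k<n. \<Sum>j<r. \<Sum>l<r. f i k j l)"
    by (rule sum.cong[OF refl], rule sum.swap)
  finally show ?thesis using L R by simp
qed

lemma mip_UUT: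
  fixes U V :: "real mat"
  assumes U: "U \<in> carrier_mat n r" and V: "V \<in> carrier_mat n r"
  shows "mip (U * U\<^sup>T) (V * V\<^sup>T) = fro2 (U\<^sup>T * V)"
proof -
  have "mip (U * U\<^sup>T) (V * V\<^sup>T) = (\<Sum>i<n. \<Sum>k<n. (\<Sum>j<r. U $$ (i,j) * U $$ (k,j)) * (\<Sum>l<r. V $$ (i,l) * V $$ (k,l)))"
    unfolding mip_def using U V by (simp add: scalar_prod_def atLeast0LessThan)
  also have "\<dots> = (\<Sum>j<r. \<Sum>l<r. (\<Sum>i<n. U $$ (i,j) * V $$ (i,l))^2)" by (rule quad_swap)
  also have "\<dots> = fro2 (U\<^sup>T * V)" unfolding fro2_def mip_def using U V
    by (simp add: scalar_prod_def atLeast0LessThan power2_eq_square)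
  finally show ?thesis .
qed

lemma fro2_expand: "fro2 Q = (\<Sum>i<dim_row Q. \<Sum>j<dim_col Q. (Q $$ (i,j))^2)"
  unfolding fro2_def mip_def by (simp add: power2_eq_square)

lemma fro2_sub1:
  assumes Q: "Q \<in> carrier_mat (m+r) (m+r)" and E: "E \<in> carrier_mat r r"
    and e: "\<And>i j. i < r \<Longrightarrow> j < r \<Longrightarrow> E $$ (i,j) = Q $$ (i,j)"
  shows "fro2 E \<le> fro2 Q"
proof -
  have "fro2 E = (\<Sum>i<r. \<Sum>j<r. (Q $$ (i,j))^2)" unfolding fro2_expand using E e by simp
  also have "\<dots> \<le> (\<Sum>i<r. \<Sum>j<r+m. (Q $$ (i,j))^2)"
    by (intro sum_mono sum_mono2) auto
  also have "\<dots> \<le> (\<Sum>i<r+m. \<Sum>j<r+m. (Q $$ (i,j))^2)"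
    by (intro sum_mono2) (auto intro: sum_nonneg)
  also have "\<dots> = fro2 Q" unfolding fro2_expand using Q by (simp add: add.commute)
  finally show ?thesis .
qed

lemma fro2_sub2:
  assumes Q: "Q \<in> carrier_mat (m+r) (m+r)" and E: "E \<in> carrier_mat m r"
    and e: "\<And>q j. q < m \<Longrightarrow> j < r \<Longrightarrow> E $$ (q,j) = Q $$ (r+q,j)"
  shows "fro2 E \<le> fro2 Q"
proof -
  let ?g = "\<lambda>i. \<Sum>j<r+m. (Q $$ (i,j))^2"
  have "fro2 E = (\<Sum>q<m. \<Sum>j<r. (Q $$ (r+q,j))^2)" unfolding fro2_expand using E e by simp
  also have "\<dots> \<le> (\<Sum>q<m. ?g (r+q))"
    by (intro sum_mono sum_mono2) auto
  also have "\<dots> \<le> (\<Sum>i<r. ?g i) + (\<Sum>q<m. ?g (r+q))"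
    by (simp add: sum_nonneg)
  also have "\<dots> = (\<Sum>i<r+m. ?g i)" by (rule split_sum[symmetric])
  also have "\<dots> = fro2 Q" unfolding fro2_expand using Q by (simp add: add.commute)
  finally show ?thesis .
qed

lemma id1: fixes B B0 :: "real mat"
  assumes B: "B \<in> carrier_mat r r" and B0: "B0 \<in> carrier_mat r r"
  shows "B * B - B0 * B0 = B * (B - B0) + (B - B0) * B0"
proof -
  have "B * (B - B0) = B * B - B * B0" by (rule mult_minus_distrib_mat[OF B B B0])
  moreover have "(B - B0) * B0 = B * B0 - B0 * B0" by (rule minus_mult_distrib_mat[OF B B0 B0])
  ultimately show ?thesis using B B0 by (intro eq_matI) auto
qed

lemma id2: fixes B B0 C C0 :: "real mat"
  assumes B: "B \<in> carrier_mat r r" and B0: "B0 \<in> carrier_mat r r"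
    and C: "C \<in> carrier_mat m r" and C0: "C0 \<in> carrier_mat m r"
  shows "(C - C0) * B0 = (C * B - C0 * B0) - C * (B - B0)"
proof -
  have "C * (B - B0) = C * B - C * B0" by (rule mult_minus_distrib_mat[OF C B B0])
  moreover have "(C - C0) * B0 = C * B0 - C0 * B0" by (rule minus_mult_distrib_mat[OF C C0 B0])
  ultimately show ?thesis using B B0 C C0 by (intro eq_matI) auto
qed

lemma id3: fixes A A0 B B0 :: "real mat"
  assumes A: "A \<in> carrier_mat m r" and A0: "A0 \<in> carrier_mat m r"
    and B: "B \<in> carrier_mat r r" and B0: "B0 \<in> carrier_mat r r"
  shows "(A - A0) * (B0 + 1\<^sub>m r) = (A * (B + 1\<^sub>m r) - A0 * (B0 + 1\<^sub>m r)) - A * (B - B0)"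
proof -
  have 1: "(A - A0) * (B0 + 1\<^sub>m r) = A * (B0 + 1\<^sub>m r) - A0 * (B0 + 1\<^sub>m r)"
    using A A0 B0 by (intro minus_mult_distrib_mat) auto
  have 2: "A * (B0 + 1\<^sub>m r) = A * B0 + A" using A B0 by (simp add: mult_add_distrib_mat)
  have 3: "A * (B + 1\<^sub>m r) = A * B + A" using A B by (simp add: mult_add_distrib_mat)
  have 4: "A * (B - B0) = A * B - A * B0" by (rule mult_minus_distrib_mat[OF A B B0])
  show ?thesis unfolding 1 2 3 4 using A A0 B B0 by (intro eq_matI) auto
qed

lemma UV_bound: assumes A: "A \<in> carrier_mat m r" and A0: "A0 \<in> carrier_mat m r"
  shows "fro2 (cayleyU A - cayleyU A0) \<le> 4 * fro2 (Yt A - Yt A0)"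
proof -
  let ?D = "Yt A - Yt A0"
  have Uc: "cayleyU A \<in> carrier_mat (m+r) r" by (rule U_idx(1)[OF A])
  have Vc: "cayleyU A0 \<in> carrier_mat (m+r) r" by (rule U_idx(1)) (rule A0)
  have Wc: "Yt A \<in> carrier_mat (m+r) (m+r)" by (rule Yt(1)[OF A])
  have W0c: "Yt A0 \<in> carrier_mat (m+r) (m+r)" by (rule Yt(1)) (rule A0)
  have "fro2 (cayleyU A - cayleyU A0) = (\<Sum>i<m+r. \<Sum>j<r. ((cayleyU A - cayleyU A0) $$ (i,j))^2)"
    unfolding fro2_expand using Uc Vc by simp
  also have "\<dots> = (\<Sum>i<m+r. \<Sum>j<r. 4 * (?D $$ (i,j))^2)"
  proof (intro sum.cong refl)
    fix i j assume i: "i \<in> {..<m+r}" and j: "j \<in> {..<r}"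
    have "(cayleyU A - cayleyU A0) $$ (i,j) = 2 * ?D $$ (i,j)"
      using i j Uc Vc Wc W0c U_idx(2)[OF A, of i j] U_idx(2)[OF A0, of i j] by simp
    thus "((cayleyU A - cayleyU A0) $$ (i,j))^2 = 4 * (?D $$ (i,j))^2" by (simp add: power2_eq_square)
  qed
  also have "\<dots> \<le> (\<Sum>i<m+r. \<Sum>j<m+r. 4 * (?D $$ (i,j))^2)"
    by (intro sum_mono sum_mono2) auto
  also have "\<dots> = 4 * fro2 ?D" unfolding fro2_expand using Wc W0c by (simp add: sum_distrib_left)
  finally show ?thesis .
qed

lemma D_bound: assumes A: "A \<in> carrier_mat m r" and A0: "A0 \<in> carrier_mat m r"
  shows "fro2 (Yt A - Yt A0) \<le> fro2 (Xmat A - Xmat A0)"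
proof -
  let ?n = "m + r"
  have Wc: "Yt A \<in> carrier_mat ?n ?n" by (rule Yt(1)[OF A])
  have W0c: "Yt A0 \<in> carrier_mat ?n ?n" by (rule Yt(1)) (rule A0)
  have XA: "Xmat A \<in> carrier_mat ?n ?n" by (rule X_dims(3)[OF A])
  have XA0: "Xmat A0 \<in> carrier_mat ?n ?n" by (rule X_dims(3)) (rule A0)
  have Xd: "Xmat A - Xmat A0 \<in> carrier_mat ?n ?n" using XA0 by (rule minus_carrier_mat)
  have "Yt A - Yt A0 = Yt A * ((Xmat A - Xmat A0) * Yt A0)"
    using Yt_diff[OF A A0] Wc W0c Xd by (simp add: assoc_mult_mat[of _ ?n ?n])
  hence "fro2 (Yt A - Yt A0) = fro2 (Yt A * ((Xmat A - Xmat A0) * Yt A0))" by simp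
  also have "\<dots> \<le> 1 * fro2 ((Xmat A - Xmat A0) * Yt A0)"
    by (rule fro2_mult_left[OF Wc, of _ ?n]) (use Xd W0c Yt_contr[OF A] in auto)
  also have "\<dots> \<le> 1 * (1 * fro2 (Xmat A - Xmat A0))"
    using fro2_mult_right[OF W0c Xd, of 1] YtT_contr[OF A0] by simp
  finally show ?thesis by simp
qed

lemma cayley_setup:
  fixes A :: "real mat"
  assumes A: "A \<in> carrier_mat m r" and r1: "1 \<le> r" and a1: "spec_norm A < 1"
  shows "\<exists>Y. blk A Y m r (spec_norm A)
     \<and> (\<forall>i<r. \<forall>j<r. cayleyU A $$ (i,j) = (Y + Y - 1\<^sub>m r) $$ (i,j))
     \<and> (\<forall>q<m. \<forall>j<r. cayleyU A $$ (r+q,j) = (A * Y + A * Y) $$ (q,j))"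
proof -
  let ?a = "spec_norm A"
  have a0: "0 \<le> ?a" by (rule spec_bound(1)[OF A r1])
  have Ax: "\<And>x. x \<in> carrier_vec r \<Longrightarrow> (A *\<^sub>v x) \<bullet> (A *\<^sub>v x) \<le> ?a^2 * (x \<bullet> x)"
    by (rule spec_bound(2)[OF A r1])
  have ATy: "\<And>y. y \<in> carrier_vec m \<Longrightarrow> (A\<^sup>T *\<^sub>v y) \<bullet> (A\<^sup>T *\<^sub>v y) \<le> ?a^2 * (y \<bullet> y)"
    by (rule transpose_bound[OF A a0 Ax])
  obtain Y where Y: "Y \<in> carrier_mat r r" "(1\<^sub>m r + A\<^sup>T * A) * Y = 1\<^sub>m r"
    "\<forall>i<r. \<forall>j<r. cayleyU A $$ (i,j) = (Y + Y - 1\<^sub>m r) $$ (i,j)"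
    "\<forall>q<m. \<forall>j<r. cayleyU A $$ (r+q,j) = (A * Y + A * Y) $$ (q,j)"
    using cayley_blk[OF A] by blast
  have "blk A Y m r ?a" by (unfold_locales) (use A Y a0 a1 Ax ATy in auto)
  thus ?thesis using Y by blast
qed

lemma cayley_orth:
  fixes A Y :: "real mat"
  assumes bl: "blk A Y m r a"
    and U1: "\<forall>i<r. \<forall>j<r. cayleyU A $$ (i,j) = (Y + Y - 1\<^sub>m r) $$ (i,j)"
    and U2: "\<forall>q<m. \<forall>j<r. cayleyU A $$ (r+q,j) = (A * Y + A * Y) $$ (q,j)"
  shows "(cayleyU A)\<^sup>T * cayleyU A = 1\<^sub>m r"
    "\<And>i j. i < r \<Longrightarrow> j < r \<Longrightarrow> (cayleyU A * (cayleyU A)\<^sup>T) $$ (i,j) = (blk.B Y r * blk.B Y r) $$ (i,j)"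
    "\<And>q j. q < m \<Longrightarrow> j < r \<Longrightarrow> (cayleyU A * (cayleyU A)\<^sup>T) $$ (r+q,j) = (blk.C A Y * blk.B Y r) $$ (q,j)"
proof -
  interpret blk A Y m r a by (rule bl)
  have Uc: "cayleyU A \<in> carrier_mat (m+r) r" by (rule U_idx(1)[OF A])
  have U1': "\<And>i j. i < r \<Longrightarrow> j < r \<Longrightarrow> cayleyU A $$ (i,j) = B $$ (i,j)" using U1 unfolding B_def by blast
  have U2': "\<And>q j. q < m \<Longrightarrow> j < r \<Longrightarrow> cayleyU A $$ (r+q,j) = C $$ (q,j)" using U2 unfolding C_def by blast
  have st1: "(cayleyU A)\<^sup>T * cayleyU A = B\<^sup>T * B + C\<^sup>T * C"
    by (rule stack(1)[OF Uc B C]) (use U1' U2' in auto)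
  show "(cayleyU A)\<^sup>T * cayleyU A = 1\<^sub>m r" using st1 B_sym BC_orth by simp
  show "(cayleyU A * (cayleyU A)\<^sup>T) $$ (i,j) = (B * B) $$ (i,j)" if "i < r" "j < r" for i j
  proof -
    have "(cayleyU A * (cayleyU A)\<^sup>T) $$ (i,j) = (B * B\<^sup>T) $$ (i,j)"
      by (rule stack(2)[OF Uc B C]) (use U1' U2' that in auto)
    thus ?thesis using B_sym by simp
  qed
  show "(cayleyU A * (cayleyU A)\<^sup>T) $$ (r+q,j) = (C * B) $$ (q,j)" if "q < m" "j < r" for q j
  proof -
    have "(cayleyU A * (cayleyU A)\<^sup>T) $$ (r+q,j) = (C * B\<^sup>T) $$ (q,j)"
      by (rule stack(3)[OF Uc B C]) (use U1' U2' that in auto)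
    thus ?thesis using B_sym by simp
  qed
qed

lemma main_bounds:
  fixes A A0 :: "real mat"
  assumes A: "A \<in> carrier_mat m r" and A0: "A0 \<in> carrier_mat m r" and r1: "1 \<le> r"
    and a1: "spec_norm A < 1" and b1: "spec_norm A0 < 1"
  shows "sinTheta_F (cayleyU A) (cayleyU A0) \<le> 4 * fn (A - A0)"
    "fn (A - A0) \<le> sqrt 2 * (1 + 32 * sqrt 2 * (1 + (spec_norm A0)\<^sup>2)\<^sup>2 / (1 - (spec_norm A0)\<^sup>2)\<^sup>2)
               * sinTheta_F (cayleyU A) (cayleyU A0)"
proof -
  obtain Y where bY: "blk A Y m r (spec_norm A)"
    and U1: "\<forall>i<r. \<forall>j<r. cayleyU A $$ (i,j) = (Y + Y - 1\<^sub>m r) $$ (i,j)"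
    and U2: "\<forall>q<m. \<forall>j<r. cayleyU A $$ (r+q,j) = (A * Y + A * Y) $$ (q,j)"
    using cayley_setup[OF A r1 a1] by blast
  obtain Y0 where bY0: "blk A0 Y0 m r (spec_norm A0)"
    and V1: "\<forall>i<r. \<forall>j<r. cayleyU A0 $$ (i,j) = (Y0 + Y0 - 1\<^sub>m r) $$ (i,j)"
    and V2: "\<forall>q<m. \<forall>j<r. cayleyU A0 $$ (r+q,j) = (A0 * Y0 + A0 * Y0) $$ (q,j)"
    using cayley_setup[OF A0 r1 b1] by blast
  interpret bA: blk A Y m r "spec_norm A" by (rule bY)
  interpret b0: blk A0 Y0 m r "spec_norm A0" by (rule bY0)
  let ?U = "cayleyU A" and ?V = "cayleyU A0"
  have Uc: "?U \<in> carrier_mat (m+r) r" by (rule U_idx(1)[OF A])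
  have Vc: "?V \<in> carrier_mat (m+r) r" by (rule U_idx(1)) (rule A0)
  note oU = cayley_orth[OF bY U1 U2]
  note oV = cayley_orth[OF bY0 V1 V2]
  define M where "M = ?U\<^sup>T * ?V"
  have Mc: "M \<in> carrier_mat r r" unfolding M_def using Uc Vc by simp
  have Mcontr: "(M *\<^sub>v x) \<bullet> (M *\<^sub>v x) \<le> x \<bullet> x" if x: "x \<in> carrier_vec r" for x
  proof -
    have Vx: "?V *\<^sub>v x \<in> carrier_vec (m+r)" using Vc x by simp
    have "M *\<^sub>v x = ?U\<^sup>T *\<^sub>v (?V *\<^sub>v x)" unfolding M_def using Uc Vc x by (simp add: assoc_mult_mat_vec)
    hence "(M *\<^sub>v x) \<bullet> (M *\<^sub>v x) \<le> (?V *\<^sub>v x) \<bullet> (?V *\<^sub>v x)" using orth_T_contr[OF Uc oU(1) Vx] by simp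
    also have "\<dots> = x \<bullet> x" by (rule orth_norm[OF Vc oV(1) x])
    finally show ?thesis .
  qed
  define s2 where "s2 = real r - fro2 M"
  have sdef: "sinTheta_F ?U ?V = sqrt s2"
    unfolding sinTheta_F_def s2_def M_def[symmetric] using sv_sum[OF Mc Mcontr] by simp
  have s2nn: "0 \<le> s2"
  proof -
    have "fro2 (M * 1\<^sub>m r) \<le> 1 * fro2 (1\<^sub>m r :: real mat)"
      by (rule fro2_mult_left[OF Mc]) (use Mcontr in auto)
    moreover have "fro2 (1\<^sub>m r :: real mat) = real r" unfolding fro2_def using mip_one[of "1\<^sub>m r" r] mtr_one by simp
    moreover have "M * 1\<^sub>m r = M" using Mc by simp
    ultimately have "fro2 M \<le> real r" by simp
    thus ?thesis by (simp add: s2_def)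
  qed
  define s where "s = sqrt s2"
  have s0: "0 \<le> s" unfolding s_def using s2nn by simp
  have ss: "s2 = s^2" unfolding s_def using s2nn by simp
  have "s2 \<le> fro2 (?U - ?V)" unfolding s2_def M_def by (rule sin_le_diff[OF Uc Vc oU(1) oV(1)])
  also have "\<dots> \<le> 4 * fro2 (Yt A - Yt A0)" by (rule UV_bound[OF A A0])
  also have "\<dots> \<le> 4 * fro2 (Xmat A - Xmat A0)" using D_bound[OF A A0] by simp
  also have "\<dots> = 8 * fro2 (A - A0)" using fro2_X[OF A A0] by simp
  finally have "s2 \<le> 8 * fro2 (A - A0)" .
  hence "sqrt s2 \<le> sqrt 8 * fn (A - A0)" unfolding fn_def by (metis real_sqrt_le_mono real_sqrt_mult)
  also have "sqrt 8 * fn (A - A0) \<le> 4 * fn (A - A0)"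
  proof (rule mult_right_mono)
    show "sqrt 8 \<le> (4::real)" by (rule real_le_lsqrt) auto
  qed (rule fn_nonneg)
  finally show "sinTheta_F ?U ?V \<le> 4 * fn (A - A0)" unfolding sdef .
  let ?az = "spec_norm A0"
  define b where "b = (1 - ?az^2) / (1 + ?az^2)"
  have a00: "0 \<le> ?az" by (rule spec_bound(1)[OF A0 r1])
  have a0sq: "?az^2 < 1" using a00 b1 by (simp add: abs_square_less_1)
  have bpos: "0 < b" unfolding b_def using a0sq by (simp add: add_pos_nonneg)
  have ble: "b \<le> 1" unfolding b_def using a00 by (simp add: divide_le_eq add_pos_nonneg)
  let ?B = "blk.B Y r" and ?C = "blk.C A Y" and ?Bz = "blk.B Y0 r" and ?Cz = "blk.C A0 Y0"
  have Bc: "?B \<in> carrier_mat r r" by (rule bA.B)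
  have Cc: "?C \<in> carrier_mat m r" by (rule bA.C)
  have B0c: "?Bz \<in> carrier_mat r r" by (rule b0.B)
  have C0c: "?Cz \<in> carrier_mat m r" by (rule b0.C)
  define P where "P = ?U * ?U\<^sup>T"
  define P0 where "P0 = ?V * ?V\<^sup>T"
  have Pc: "P - P0 \<in> carrier_mat (m+r) (m+r)" unfolding P_def P0_def using Vc by (intro minus_carrier_mat) simp
  have fP: "fro2 (P - P0) = 2 * s2"
  proof -
    have "fro2 (P - P0) = fro2 P - 2 * mip P P0 + fro2 P0"
      by (rule fro2_minus) (use Uc Vc in \<open>auto simp: P_def P0_def\<close>)
    also have "fro2 P = real r" unfolding fro2_def P_def mip_UUT[OF Uc Uc] oU(1)
      using mip_one[of "1\<^sub>m r" r] mtr_one by (simp add: fro2_def)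
    also have "fro2 P0 = real r" unfolding fro2_def P0_def mip_UUT[OF Vc Vc] oV(1)
      using mip_one[of "1\<^sub>m r" r] mtr_one by (simp add: fro2_def)
    also have "mip P P0 = fro2 M" unfolding P_def P0_def M_def by (rule mip_UUT[OF Uc Vc])
    finally show ?thesis unfolding s2_def by simp
  qed
  define E11 where "E11 = ?B * ?B - ?Bz * ?Bz"
  define E21 where "E21 = ?C * ?B - ?Cz * ?Bz"
  have E11c: "E11 \<in> carrier_mat r r" unfolding E11_def using B0c by (intro minus_carrier_mat) simp
  have E21c: "E21 \<in> carrier_mat m r" unfolding E21_def using B0c C0c by (intro minus_carrier_mat) simp
  have fE11: "fn E11 \<le> sqrt 2 * s"
  proof -
    have "fro2 E11 \<le> fro2 (P - P0)"
    proof (rule fro2_sub1[OF Pc E11c])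
      fix i j assume i: "i < r" and j: "j < r"
      show "E11 $$ (i,j) = (P - P0) $$ (i,j)"
        unfolding E11_def P_def P0_def using oU(2)[OF i j] oV(2)[OF i j] i j Bc B0c Uc Vc by simp
    qed
    hence "fro2 E11 \<le> 2 * s^2" using fP ss by simp
    thus ?thesis unfolding fn_def using s0 by (simp add: real_le_lsqrt real_sqrt_mult power_mult_distrib)
  qed
  have fE21: "fn E21 \<le> sqrt 2 * s"
  proof -
    have "fro2 E21 \<le> fro2 (P - P0)"
    proof (rule fro2_sub2[OF Pc E21c])
      fix q j assume q: "q < m" and j: "j < r"
      show "E21 $$ (q,j) = (P - P0) $$ (r+q,j)"
        unfolding E21_def P_def P0_def using oU(3)[OF q j] oV(3)[OF q j] q j Bc B0c Cc C0c Uc Vc by simp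
    qed
    hence "fro2 E21 \<le> 2 * s^2" using fP ss by simp
    thus ?thesis unfolding fn_def using s0 by (simp add: real_le_lsqrt real_sqrt_mult power_mult_distrib)
  qed
  define D where "D = ?B - ?Bz"
  have Dc: "D \<in> carrier_mat r r" unfolding D_def using B0c by (rule minus_carrier_mat)
  have hD: "b * fn D \<le> sqrt 2 * s"
  proof -
    have e: "E11 = ?B * D + D * ?Bz" unfolding E11_def D_def by (rule id1[OF Bc B0c])
    have m1: "0 * fro2 D \<le> mip D (?B * D)" by (rule mip_psd_left[OF Bc Dc]) (rule bA.B_psd)
    have m2: "b * fro2 D \<le> mip D (D * ?Bz)"
      by (rule mip_psd_right[OF B0c Dc b0.B_sym]) (use b0.B_pd in \<open>simp add: b_def\<close>)
    have "mip D E11 = mip D (?B * D) + mip D (D * ?Bz)" unfolding e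
      by (rule mip_add) (use Bc Dc B0c in auto)
    hence "b * fro2 D \<le> mip D E11" using m1 m2 by simp
    hence "b * fn D \<le> fn E11" by (rule mip_lower_fn[OF E11c Dc])
    thus ?thesis using fE11 by simp
  qed
  define DC where "DC = ?C - ?Cz"
  have DCc: "DC \<in> carrier_mat m r" unfolding DC_def using C0c by (rule minus_carrier_mat)
  have CD: "fn (?C * D) \<le> fn D"
  proof -
    have "fro2 (?C * D) \<le> 1 * fro2 D" by (rule fro2_mult_left[OF Cc Dc]) (rule bA.C_contr)
    thus ?thesis unfolding fn_def by simp
  qed
  have hC: "b * fn DC \<le> sqrt 2 * s + fn D"
  proof -
    have e: "DC * ?Bz = E21 - ?C * D" unfolding DC_def E21_def D_def by (rule id2[OF Bc B0c Cc C0c])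
    have "b * fro2 DC \<le> mip DC (DC * ?Bz)"
      by (rule mip_psd_right[OF B0c DCc b0.B_sym]) (use b0.B_pd in \<open>simp add: b_def\<close>)
    moreover have "DC * ?Bz \<in> carrier_mat m r" using DCc B0c by simp
    ultimately have "b * fn DC \<le> fn (DC * ?Bz)" using mip_lower_fn[OF _ DCc] by blast
    also have "\<dots> \<le> fn E21 + fn (?C * D)" unfolding e by (rule fn_minus) (use E21c Cc Dc in auto)
    finally show ?thesis using fE21 CD by simp
  qed
  define Z where "Z = A - A0"
  have Zc: "Z \<in> carrier_mat m r" unfolding Z_def using A0 by (rule minus_carrier_mat)
  have AD: "fn (A * D) \<le> fn D"
  proof -
    have "fro2 (A * D) \<le> 1 * fro2 D"
    proof (rule fro2_mult_left[OF A Dc])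
      fix x :: "real vec" assume x: "x \<in> carrier_vec r"
      have "(A *\<^sub>v x) \<bullet> (A *\<^sub>v x) \<le> (spec_norm A)^2 * (x \<bullet> x)" by (rule bA.Ax[OF x])
      also have "\<dots> \<le> 1 * (x \<bullet> x)"
        using bA.a0 bA.a1 sp_self_nonneg[of x] by (intro mult_right_mono) (auto simp: power_le_one)
      finally show "(A *\<^sub>v x) \<bullet> (A *\<^sub>v x) \<le> 1 * (x \<bullet> x)" .
    qed
    thus ?thesis unfolding fn_def by simp
  qed
  have hZ: "fn Z \<le> fn DC + fn D"
  proof -
    have B01: "?Bz + 1\<^sub>m r \<in> carrier_mat r r" using B0c by simp
    have sym1: "(?Bz + 1\<^sub>m r)\<^sup>T = ?Bz + 1\<^sub>m r"
      using transpose_add[OF B0c, of "1\<^sub>m r"] b0.B_sym by simp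
    have pd1: "1 * (x \<bullet> x) \<le> x \<bullet> ((?Bz + 1\<^sub>m r) *\<^sub>v x)" if x: "x \<in> carrier_vec r" for x
    proof -
      have "(?Bz + 1\<^sub>m r) *\<^sub>v x = ?Bz *\<^sub>v x + x" using B0c x by (simp add: add_mult_distrib_mat_vec)
      hence "x \<bullet> ((?Bz + 1\<^sub>m r) *\<^sub>v x) = x \<bullet> (?Bz *\<^sub>v x) + x \<bullet> x"
        using B0c x by (simp add: scalar_prod_add_distrib[of _ r])
      thus ?thesis using b0.B_psd[OF x] by simp
    qed
    have e: "Z * (?Bz + 1\<^sub>m r) = DC - A * D"
    proof -
      have "Z * (?Bz + 1\<^sub>m r) = (A * (?B + 1\<^sub>m r) - A0 * (?Bz + 1\<^sub>m r)) - A * (?B - ?Bz)"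
        unfolding Z_def by (rule id3[OF A A0 Bc B0c])
      thus ?thesis unfolding DC_def D_def bA.C_eq b0.C_eq .
    qed
    have "1 * fro2 Z \<le> mip Z (Z * (?Bz + 1\<^sub>m r))" by (rule mip_psd_right[OF B01 Zc sym1 pd1])
    moreover have "Z * (?Bz + 1\<^sub>m r) \<in> carrier_mat m r" using Zc B01 by simp
    ultimately have "1 * fn Z \<le> fn (Z * (?Bz + 1\<^sub>m r))" using mip_lower_fn[OF _ Zc] by blast
    also have "\<dots> \<le> fn DC + fn (A * D)" unfolding e by (rule fn_minus) (use DCc A Dc in auto)
    finally show ?thesis using AD by simp
  qed
  define k where "k = 1 / b"
  have k1: "1 \<le> k" unfolding k_def using bpos ble by simp
  have fD: "fn D \<le> k * (sqrt 2 * s)" unfolding k_def using hD bpos by (simp add: pos_le_divide_eq mult.commute)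
  have fDC: "fn DC \<le> k * (sqrt 2 * s + fn D)" unfolding k_def using hC bpos by (simp add: pos_le_divide_eq mult.commute)
  have q0: "0 \<le> sqrt 2 * s" using s0 by simp
  have kk: "k * (sqrt 2 * s) \<le> k * k * (sqrt 2 * s)" using k1 q0 by (simp add: mult_right_mono)
  have "fn Z \<le> k * (sqrt 2 * s + fn D) + fn D" using hZ fDC by simp
  also have "\<dots> \<le> k * (sqrt 2 * s + k * (sqrt 2 * s)) + k * (sqrt 2 * s)"
    using fD k1 by (intro add_mono mult_left_mono) auto
  also have "\<dots> = 2 * (k * (sqrt 2 * s)) + k * k * (sqrt 2 * s)" by (simp add: algebra_simps)
  also have "\<dots> \<le> 3 * (k * k * (sqrt 2 * s))" using kk by linarith
  also have "\<dots> \<le> 64 * (k * k * s)"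
  proof -
    have "sqrt 2 \<le> (2::real)" by (rule real_le_lsqrt) auto
    hence "3 * sqrt 2 \<le> 64" by simp
    moreover have "0 \<le> k * k * s" using k1 s0 by simp
    ultimately have "3 * sqrt 2 * (k * k * s) \<le> 64 * (k * k * s)" by (rule mult_right_mono)
    thus ?thesis by (simp add: mult_ac)
  qed
  also have "\<dots> \<le> sqrt 2 * s + 64 * (k * k * s)" using s0 by simp
  also have "\<dots> = sqrt 2 * (1 + 32 * sqrt 2 * (1 + ?az\<^sup>2)\<^sup>2 / (1 - ?az\<^sup>2)\<^sup>2) * s"
  proof -
    have "k * k = (1 + ?az\<^sup>2)\<^sup>2 / (1 - ?az\<^sup>2)\<^sup>2" unfolding k_def b_def by (simp add: power2_eq_square)
    moreover have "sqrt 2 * sqrt 2 = 2" by simp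
    ultimately show ?thesis by (simp add: algebra_simps)
  qed
  finally show "fn (A - A0) \<le> sqrt 2 * (1 + 32 * sqrt 2 * (1 + ?az\<^sup>2)\<^sup>2 / (1 - ?az\<^sup>2)\<^sup>2)
               * sinTheta_F ?U ?V" unfolding Z_def sdef s_def .
qed

theorem corollary1:
  fixes p r :: nat and A A0 :: "real mat"
  assumes "1 \<le> r" and "r \<le> p"
    and "A \<in> carrier_mat (p - r) r" and "A0 \<in> carrier_mat (p - r) r"
    and "spec_norm A < 1" and "spec_norm A0 < 1"
  shows "(sinTheta_F (cayleyU A) (cayleyU A0)
            \<le> (1 - (spec_norm A0)\<^sup>2)\<^sup>2 / (8 * (1 + (spec_norm A0)\<^sup>2)\<^sup>2)
          \<longrightarrow> vnorm2 (vecm A - vecm A0)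
            \<le> sqrt 2 * (1 + 32 * sqrt 2 * (1 + (spec_norm A0)\<^sup>2)\<^sup>2 / (1 - (spec_norm A0)\<^sup>2)\<^sup>2)
               * sinTheta_F (cayleyU A) (cayleyU A0))
       \<and> sinTheta_F (cayleyU A) (cayleyU A0) \<le> 4 * vnorm2 (vecm A - vecm A0)"
  using main_bounds[OF assms(3,4,1,5,6)] vecm_fn[OF assms(3,4)] by simp

end
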